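(* Let $\gamma\in(0,1)$ and let $m$ be a positive integer. There exist a positive integer $D_0$ and a family $\tilde\Theta=\{\tilde\theta(a)\}_{a\in A}$, each $f(\cdot,\tilde\theta(a))$ a residual network of size $(d,(6^{\alpha}+1)m,D_0,\alpha+1)$, such that $$\tilde{\mathcal R}_{\mathcal D}(\tilde\Theta)\le\frac{32}{(1-\gamma)^2}(|A|+1)(|A|^4+1)\frac{\|r\|_{\mathcal B}^2}{m}$$ and $\|\tilde\Theta\|_{\mathcal P}\le\frac{12}{1-\gamma}\big(|A|^{7/2}+|A|^{1/2}\big)\|r\|_{\mathcal B}$.
   Context: Residual networks: for positive integers $d,m,D,L$, a residual network of size $(d,m,D,L)$ is a function $f(\cdot,\theta):\mathbb R^d\to\mathbb R$, $f(x,\theta)=u^{\top}h^{[L]}$, where $h^{[0]}=Vx$ and $h^{[l]}=h^{[l-1]}+U^{[l]}\sigma(W^{[l]}h^{[l-1]})$ for $l=1,\dots,L$, with $V\in\mathbb R^{D\times d}$, $W^{[l]}\in\mathbb R^{m\times D}$, $U^{[l]}\in\mathbb R^{D\times m}$, $u\in\mathbb R^D$, $\sigma(z)=\max(z,0)$ applied entrywise, and $\theta=(u,V,\{W^{[l]}\}_{l=1}^L,\{U^{[l]}\}_{l=1}^L)$. Its weighted path norm is $\|\theta\|_{\mathcal P}=\big\||u|^{\top}(I+3|U^{[L]}||W^{[L]}|)\cdots(I+3|U^{[1]}||W^{[1]}|)|V|\big\|_1$, where $|\cdot|$ of a matrix/vector is entrywise absolute value and $I$ is the $D\times D$ identity.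 For a family $\Theta=\{\theta(a)\}_{a\in A}$ of parameters (one network per action, all of the same size), $f(s,\theta(a))$ denotes the $a$-th network and $\|\Theta\|_{\mathcal P}=\sum_{a\in A}\|\theta(a)\|_{\mathcal P}$. Barron space: for a compact $S\subset\mathbb R^d$, $h:S\to\mathbb R$ is in the Barron space $\mathcal B(S)$ if there is a probability measure $\rho$ on $\mathbb R\times\mathbb R^d$ with $h(x)=\mathbb E_{(u,w)\sim\rho}[u\,\sigma(w^{\top}x)]$ for all $x\in S$; its Barron norm is $\|h\|_{\mathcal B}=\inf_\rho(\mathbb E_{\rho}[u^2\|w\|_1^2])^{1/2}$, the infimum over all such $\rho$. For $r:S\times A\to\mathbb R$ with each $r(\cdot,a)\in\mathcal B(S)$, $\|r\|_{\mathcal B}=(\sum_{a\in A}\|r(\cdot,a)\|_{\mathcal B}^2)^{1/2}$. Setting: $S\subseteq[0,1]^d$ is compact with positive Lebesgue measure; $\mathcal D$ is the uniform distribution on $S$ and $\mathcal U$ the uniform distribution on $A$; $A=\{1,\dots,2^{\alpha}\}$ with $\alpha\ge0$ an integer; $r:S\times A\to\mathbb R$ with each $r(\cdot,a)$ continuous, in $\mathcal B(S)$, and $|r(s,a)|\le1$. The Bellman effective loss is $\tilde{\mathcal R}_{\mathcal D}(\Theta)=\frac12\mathbb E_{s\sim\mathcal D,a\sim\mathcal U}\big(f(s,\theta(a))-r(s,a)-\gamma\max_{a'\in A}f(s,\theta(a'))\big)^2$. *)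

theory Defs
  imports "HOL-Probability.Probability"
begin

text \<open>Vectors/matrices are functions on natural-number indices; only the entries
  within the size (d, m, D, L) are ever used. Input space is real^'d, d = CARD('d).\<close>

datatype 'd resnet = ResNet
  (out_w: "nat \<Rightarrow> real")               \<comment> \<open>u, entries i < D\<close>
  (in_w: "nat \<Rightarrow> 'd \<Rightarrow> real")          \<comment> \<open>V, D x d\<close>
  (W_w: "nat \<Rightarrow> nat \<Rightarrow> nat \<Rightarrow> real")   \<comment> \<open>W^[l] k j, m x D, l = 1..L\<close>
  (U_w: "nat \<Rightarrow> nat \<Rightarrow> nat \<Rightarrow> real")   \<comment> \<open>U^[l] i k, D x m, l = 1..L\<close>

definition relu :: "real \<Rightarrow> real" where "relu z = max z 0"

fun hidden :: "nat \<Rightarrow> nat \<Rightarrow> 'd::finite resnet \<Rightarrow> real^'d \<Rightarrow> nat \<Rightarrow> nat \<Rightarrow> real" where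
  "hidden m D \<theta> x 0 = (\<lambda>i. \<Sum>j\<in>UNIV. in_w \<theta> i j * x $ j)"
| "hidden m D \<theta> x (Suc l) =
     (\<lambda>i. hidden m D \<theta> x l i
          + (\<Sum>k<m. U_w \<theta> (Suc l) i k * relu (\<Sum>j<D. W_w \<theta> (Suc l) k j * hidden m D \<theta> x l j)))"

definition resnet_eval :: "nat \<Rightarrow> nat \<Rightarrow> nat \<Rightarrow> 'd::finite resnet \<Rightarrow> real^'d \<Rightarrow> real" where
  "resnet_eval m D L \<theta> x = (\<Sum>i<D. out_w \<theta> i * hidden m D \<theta> x L i)"

text \<open>Row vector |u|^T (I+3|U^[L]||W^[L]|) ... (I+3|U^[L-n+1]||W^[L-n+1]|)\<close>
fun path_row :: "nat \<Rightarrow> nat \<Rightarrow> nat \<Rightarrow> 'd resnet \<Rightarrow> nat \<Rightarrow> nat \<Rightarrow> real" where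
  "path_row m D L \<theta> 0 = (\<lambda>i. \<bar>out_w \<theta> i\<bar>)"
| "path_row m D L \<theta> (Suc n) =
     (\<lambda>j. path_row m D L \<theta> n j
          + 3 * (\<Sum>i<D. path_row m D L \<theta> n i *
                   (\<Sum>k<m. \<bar>U_w \<theta> (L - n) i k\<bar> * \<bar>W_w \<theta> (L - n) k j\<bar>)))"

definition path_norm :: "nat \<Rightarrow> nat \<Rightarrow> nat \<Rightarrow> 'd::finite resnet \<Rightarrow> real" where
  "path_norm m D L \<theta> = (\<Sum>j\<in>UNIV. \<bar>\<Sum>i<D. path_row m D L \<theta> L i * \<bar>in_w \<theta> i j\<bar>\<bar>)"

definition l1norm :: "real^'d::finite \<Rightarrow> real" where
  "l1norm w = (\<Sum>j\<in>UNIV. \<bar>w $ j\<bar>)"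

definition barron_reps :: "(real^'d::finite) set \<Rightarrow> (real^'d \<Rightarrow> real) \<Rightarrow> (real \<times> (real^'d)) measure set" where
  "barron_reps S h = {\<rho>. prob_space \<rho> \<and> sets \<rho> = sets borel \<and>
     (\<forall>x\<in>S. integrable \<rho> (\<lambda>(u, w). u * relu (w \<bullet> x)) \<and>
             h x = (\<integral>(u, w). u * relu (w \<bullet> x) \<partial>\<rho>))}"

definition in_barron :: "(real^'d::finite) set \<Rightarrow> (real^'d \<Rightarrow> real) \<Rightarrow> bool" where
  "in_barron S h \<longleftrightarrow> barron_reps S h \<noteq> {}"

definition enn_sqrt :: "ennreal \<Rightarrow> ennreal" where
  "enn_sqrt x = (if x = \<infinity> then \<infinity> else ennreal (sqrt (enn2real x)))"

definition barron_norm :: "(real^'d::finite) set \<Rightarrow> (real^'d \<Rightarrow> real) \<Rightarrow> ennreal" where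
  "barron_norm S h = (INF \<rho>\<in>barron_reps S h.
      enn_sqrt (\<integral>\<^sup>+ (u, w). ennreal (u\<^sup>2 * (l1norm w)\<^sup>2) \<partial>\<rho>))"

definition barron_norm_family :: "(real^'d::finite) set \<Rightarrow> nat set \<Rightarrow> (real^'d \<Rightarrow> nat \<Rightarrow> real) \<Rightarrow> ennreal" where
  "barron_norm_family S A r = enn_sqrt (\<Sum>a\<in>A. (barron_norm S (\<lambda>s. r s a))\<^sup>2)"

definition bellman_loss ::
  "(real^'d::finite) set \<Rightarrow> nat set \<Rightarrow> real \<Rightarrow> nat \<Rightarrow> nat \<Rightarrow> nat \<Rightarrow>
   (real^'d \<Rightarrow> nat \<Rightarrow> real) \<Rightarrow> (nat \<Rightarrow> 'd resnet) \<Rightarrow> real" where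
  "bellman_loss S A \<gamma> m D L r \<Theta> =
     1/2 * (\<integral>s. (1 / real (card A)) *
        (\<Sum>a\<in>A. (resnet_eval m D L (\<Theta> a) s - r s a
                   - \<gamma> * Max ((\<lambda>a'. resnet_eval m D L (\<Theta> a') s) ` A))\<^sup>2)
       \<partial>(uniform_measure lborel S))"

end

theory Submission
  imports Defs
begin

lemma inner_cube_le:
  fixes w x :: "real^'d::finite"
  assumes "\<forall>i. 0 \<le> x $ i \<and> x $ i \<le> 1"
  shows "\<bar>w \<bullet> x\<bar> \<le> l1norm w"
proof -
  have "\<bar>w \<bullet> x\<bar> = \<bar>\<Sum>j\<in>UNIV. w $ j * x $ j\<bar>" by (simp add: inner_vec_def)
  also have "\<dots> \<le> (\<Sum>j\<in>UNIV. \<bar>w $ j * x $ j\<bar>)" by (rule sum_abs)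
  also have "\<dots> \<le> (\<Sum>j\<in>UNIV. \<bar>w $ j\<bar>)"
    apply (rule sum_mono) using assms by (simp add: abs_mult mult_left_le)
  finally show ?thesis by (simp add: l1norm_def)
qed

lemma meas_phi: "(\<lambda>(u, w). u * relu (w \<bullet> (x::real^'d::finite))) \<in> borel_measurable (borel :: (real \<times> (real^'d)) measure)"
  by (intro borel_measurable_continuous_onI) (auto simp: relu_def case_prod_beta intro!: continuous_intros)

lemma meas_mom: "(\<lambda>(u, w). u\<^sup>2 * (l1norm (w::real^'d::finite))\<^sup>2) \<in> borel_measurable (borel :: (real \<times> (real^'d)) measure)"
  by (intro borel_measurable_continuous_onI) (auto simp: l1norm_def case_prod_beta intro!: continuous_intros)

lemma meas_t: "(\<lambda>(u, w). \<bar>u\<bar> * (l1norm (w::real^'d::finite))) \<in> borel_measurable (borel :: (real \<times> (real^'d)) measure)"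
  by (intro borel_measurable_continuous_onI) (auto simp: l1norm_def case_prod_beta intro!: continuous_intros)

lemma meas_phi2: "(\<lambda>p. fst (fst p) * relu (snd (fst p) \<bullet> (snd p::real^'d::finite))) \<in> borel_measurable ((borel :: (real \<times> (real^'d)) measure) \<Otimes>\<^sub>M borel)"
  unfolding borel_prod
  by (intro borel_measurable_continuous_onI) (auto simp: relu_def case_prod_beta intro!: continuous_intros)

lemma meas_G:
  fixes R h :: "real^'d::finite \<Rightarrow> real"
  assumes [measurable]: "R \<in> borel_measurable borel" "h \<in> borel_measurable borel"
  shows "(\<lambda>p. ennreal ((R (snd p) + fst (fst p) * relu (snd (fst p) \<bullet> snd p) - h (snd p))\<^sup>2))
     \<in> borel_measurable ((borel :: (real \<times> (real^'d)) measure) \<Otimes>\<^sub>M borel)"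
  using meas_phi2[where 'd='d, measurable] by measurable

lemma maurey_point:
  fixes \<rho> :: "(real \<times> (real^'d::finite)) measure"
  assumes \<rho>: "prob_space \<rho>" "sets \<rho> = sets borel"
   and x: "\<forall>i. 0 \<le> x$i \<and> x$i \<le> 1"
   and int: "integrable \<rho> (\<lambda>(u,w). u * relu(w \<bullet> x))"
   and hx: "hx = (\<integral>(u,w). u * relu(w \<bullet> x) \<partial>\<rho>)"
   and mom: "(\<integral>\<^sup>+(u,w). ennreal(u\<^sup>2 * (l1norm w)\<^sup>2) \<partial>\<rho>) = ennreal M" and M0: "0 \<le> M"
  shows "(\<integral>\<^sup>+\<omega>. ennreal ((Rx + fst \<omega> * relu (snd \<omega> \<bullet> x) - hx)\<^sup>2) \<partial>\<rho>) \<le> ennreal (Rx\<^sup>2 + M)"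
proof -
  interpret P: prob_space \<rho> by fact
  define \<phi> where "\<phi> = (\<lambda>\<omega>::real \<times> (real^'d). fst \<omega> * relu (snd \<omega> \<bullet> x))"
  define q where "q = (\<lambda>\<omega>::real \<times> (real^'d). (fst \<omega>)\<^sup>2 * (l1norm (snd \<omega>))\<^sup>2)"
  have bm: "borel_measurable \<rho> = borel_measurable borel"
    by (rule measurable_cong_sets) (use \<rho> in auto)
  have e1: "(\<lambda>(u,w). u * relu(w \<bullet> x)) = \<phi>" by (rule ext) (simp add: \<phi>_def split: prod.splits)
  have e2: "(\<lambda>(u,w). u\<^sup>2 * (l1norm w)\<^sup>2) = q" by (rule ext) (simp add: q_def split: prod.splits)
  have e3: "(\<lambda>(u,w). ennreal(u\<^sup>2 * (l1norm w)\<^sup>2)) = (\<lambda>\<omega>. ennreal (q \<omega>))" by (rule ext) (simp add: q_def split: prod.splits)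
  have phi_int: "integrable \<rho> \<phi>" using int by (simp add: e1)
  have hx': "hx = integral\<^sup>L \<rho> \<phi>" using hx by (simp add: e1)
  have qm: "q \<in> borel_measurable \<rho>" using meas_mom[where 'd='d] bm by (metis e2)
  have mom': "(\<integral>\<^sup>+\<omega>. ennreal (q \<omega>) \<partial>\<rho>) = ennreal M" using mom by (simp add: e3)
  have q_int: "integrable \<rho> q"
    by (rule integrableI_nonneg) (use qm mom' in \<open>auto simp: q_def\<close>)
  have phim: "\<phi> \<in> borel_measurable \<rho>" using phi_int by auto
  have phi_le: "(\<phi> \<omega>)\<^sup>2 \<le> q \<omega>" for \<omega>
  proof -
    have "\<bar>relu (snd \<omega> \<bullet> x)\<bar> \<le> l1norm (snd \<omega>)"
      using inner_cube_le[OF x, of "snd \<omega>"] by (auto simp: relu_def)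
    hence "\<bar>\<phi> \<omega>\<bar> \<le> \<bar>fst \<omega>\<bar> * l1norm (snd \<omega>)"
      by (simp add: \<phi>_def abs_mult mult_left_mono)
    hence "\<bar>\<phi> \<omega>\<bar>\<^sup>2 \<le> (\<bar>fst \<omega>\<bar> * l1norm (snd \<omega>))\<^sup>2"
      by (rule power_mono) simp
    thus ?thesis by (simp add: q_def power_mult_distrib)
  qed
  have phi2_int: "integrable \<rho> (\<lambda>\<omega>. (\<phi> \<omega>)\<^sup>2)"
    by (rule Bochner_Integration.integrable_bound[OF q_int]) (use phim in \<open>auto intro!: AE_I2 order_trans[OF phi_le]\<close>)
  define a where "a = Rx - hx"
  have eq: "(Rx + fst \<omega> * relu (snd \<omega> \<bullet> x) - hx)\<^sup>2 = a\<^sup>2 + 2 * a * \<phi> \<omega> + (\<phi> \<omega>)\<^sup>2" for \<omega>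
    by (auto simp: a_def \<phi>_def power2_eq_square algebra_simps)
  have nn: "0 \<le> a\<^sup>2 + 2 * a * \<phi> \<omega> + (\<phi> \<omega>)\<^sup>2" for \<omega>
    by (simp flip: eq)
  have int2: "integrable \<rho> (\<lambda>\<omega>. a\<^sup>2 + 2 * a * \<phi> \<omega> + (\<phi> \<omega>)\<^sup>2)"
    using phi_int phi2_int by auto
  have "(\<integral>\<^sup>+\<omega>. ennreal ((Rx + fst \<omega> * relu (snd \<omega> \<bullet> x) - hx)\<^sup>2) \<partial>\<rho>)
      = ennreal (\<integral>\<omega>. a\<^sup>2 + 2 * a * \<phi> \<omega> + (\<phi> \<omega>)\<^sup>2 \<partial>\<rho>)"
    unfolding eq by (rule nn_integral_eq_integral[OF int2]) (auto intro!: AE_I2 nn)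
  also have "(\<integral>\<omega>. a\<^sup>2 + 2 * a * \<phi> \<omega> + (\<phi> \<omega>)\<^sup>2 \<partial>\<rho>) = a\<^sup>2 + 2 * a * hx + (\<integral>\<omega>. (\<phi> \<omega>)\<^sup>2 \<partial>\<rho>)"
    using phi_int phi2_int by (simp add: hx' P.prob_space)
  also have "(\<integral>\<omega>. (\<phi> \<omega>)\<^sup>2 \<partial>\<rho>) \<le> integral\<^sup>L \<rho> q"
    by (rule integral_mono[OF phi2_int q_int phi_le])
  also have "integral\<^sup>L \<rho> q = M"
  proof -
    have "ennreal (integral\<^sup>L \<rho> q) = ennreal M"
      using nn_integral_eq_integral[OF q_int] mom' by (auto simp: q_def)
    moreover note M0
    moreover have "integral\<^sup>L \<rho> q \<ge> 0" by (rule Bochner_Integration.integral_nonneg) (auto simp: q_def)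
    ultimately show ?thesis by simp
  qed
  finally have "(\<integral>\<^sup>+\<omega>. ennreal ((Rx + fst \<omega> * relu (snd \<omega> \<bullet> x) - hx)\<^sup>2) \<partial>\<rho>)
      \<le> ennreal (a\<^sup>2 + 2 * a * hx + M)" by (simp add: ennreal_leI)
  also have "a\<^sup>2 + 2 * a * hx + M \<le> Rx\<^sup>2 + M"
    by (simp add: a_def power2_eq_square algebra_simps)
  finally show ?thesis by (simp add: ennreal_leI)
qed

lemma meas_x: "(\<lambda>x::real^'d::finite. u * relu (w \<bullet> x)) \<in> borel_measurable borel"
  by (intro borel_measurable_continuous_onI) (auto simp: relu_def intro!: continuous_intros)

lemma meas_sqx:
  fixes R h :: "real^'d::finite \<Rightarrow> real"
  assumes [measurable]: "R \<in> borel_measurable borel" "h \<in> borel_measurable borel"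
  shows "(\<lambda>x. ennreal ((R x + u * relu (w \<bullet> x) - h x)\<^sup>2)) \<in> borel_measurable borel"
  using meas_x[of u w, measurable] by measurable

lemma meas_sqw:
  "(\<lambda>\<omega>. ennreal ((c + fst \<omega> * relu (snd \<omega> \<bullet> (x::real^'d::finite)) - e)\<^sup>2)) \<in> borel_measurable (borel :: (real \<times> (real^'d)) measure)"
  by (intro measurable_compose[OF _ measurable_ennreal] borel_measurable_continuous_onI)
     (auto simp: relu_def intro!: continuous_intros)

lemma meas_tw:
  "(\<lambda>\<omega>. ennreal (c * (\<bar>fst \<omega>\<bar> * l1norm (snd \<omega> :: real^'d::finite)))) \<in> borel_measurable (borel :: (real \<times> (real^'d)) measure)"
  by (intro measurable_compose[OF _ measurable_ennreal] borel_measurable_continuous_onI)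
     (auto simp: l1norm_def intro!: continuous_intros)

lemma meas_tfst:
  "(\<lambda>p. ennreal (c * (\<bar>fst (fst p)\<bar> * l1norm (snd (fst p) :: real^'d::finite)))) \<in> borel_measurable ((borel :: (real \<times> (real^'d)) measure) \<Otimes>\<^sub>M (borel :: (real^'d) measure))"
  unfolding borel_prod
  by (intro measurable_compose[OF _ measurable_ennreal] borel_measurable_continuous_onI)
     (auto simp: l1norm_def intro!: continuous_intros)

lemma maurey_step:
  fixes \<rho> :: "(real \<times> (real^'d::finite)) measure" and \<mu> :: "(real^'d) measure"
  assumes \<rho>: "prob_space \<rho>" "sets \<rho> = sets borel"
   and \<mu>: "prob_space \<mu>" "sets \<mu> = sets borel"
   and hm: "h \<in> borel_measurable borel" and Rm: "R \<in> borel_measurable borel"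
   and ae: "AE x in \<mu>. (\<forall>i. 0 \<le> x$i \<and> x$i \<le> 1) \<and> integrable \<rho> (\<lambda>(u,w). u * relu(w \<bullet> x))
              \<and> h x = (\<integral>(u,w). u * relu(w \<bullet> x) \<partial>\<rho>)"
   and mom: "(\<integral>\<^sup>+(u,w). ennreal(u\<^sup>2 * (l1norm w)\<^sup>2) \<partial>\<rho>) = ennreal M"
   and M0: "0 \<le> M" and MN: "M < N\<^sup>2" and N: "0 < N"
  shows "\<exists>u w. (\<integral>\<^sup>+x. ennreal ((R x + u * relu (w \<bullet> x) - h x)\<^sup>2) \<partial>\<mu>) + ennreal (7 * N * (\<bar>u\<bar> * l1norm w))
          \<le> (\<integral>\<^sup>+x. ennreal ((R x)\<^sup>2) \<partial>\<mu>) + ennreal (8 * N\<^sup>2)"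
proof -
  interpret P: prob_space \<rho> by fact
  interpret Q: prob_space \<mu> by fact
  interpret PQ: pair_sigma_finite \<rho> \<mu>
    by (simp add: pair_sigma_finite_def P.sigma_finite_measure_axioms Q.sigma_finite_measure_axioms)
  have bmr: "borel_measurable \<rho> = borel_measurable borel"
    by (rule measurable_cong_sets) (use \<rho> in auto)
  have bmm: "borel_measurable \<mu> = borel_measurable borel"
    by (rule measurable_cong_sets) (use \<mu> in auto)
  have bmp: "borel_measurable (\<rho> \<Otimes>\<^sub>M \<mu>) = borel_measurable ((borel :: (real \<times> (real^'d)) measure) \<Otimes>\<^sub>M (borel :: (real^'d) measure))"
    by (rule measurable_cong_sets) (auto intro!: sets_pair_measure_cong simp: \<rho> \<mu>)
  define A where "A = (\<integral>\<^sup>+x. ennreal ((R x)\<^sup>2) \<partial>\<mu>)"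
  define t where "t = (\<lambda>\<omega>::real \<times> (real^'d). \<bar>fst \<omega>\<bar> * l1norm (snd \<omega>))"
  define q where "q = (\<lambda>\<omega>::real \<times> (real^'d). (fst \<omega>)\<^sup>2 * (l1norm (snd \<omega>))\<^sup>2)"
  define K where "K = 9/2 * M + 7/2 * N\<^sup>2"
  have K: "K < 8 * N\<^sup>2" using MN by (simp add: K_def)
  have K0: "0 \<le> K" using M0 by (simp add: K_def)
  show ?thesis
  proof (cases "A = \<infinity>")
    case True then show ?thesis by (intro exI[of _ 0]) (simp add: A_def[symmetric])
  next
    case False
    define G where "G = (\<lambda>\<omega> x. ennreal ((R x + fst \<omega> * relu (snd \<omega> \<bullet> x) - h x)\<^sup>2) + ennreal (7 * N * t \<omega>))"
    have Gm: "case_prod G \<in> borel_measurable (\<rho> \<Otimes>\<^sub>M \<mu>)"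
      unfolding bmp G_def t_def case_prod_beta
      using meas_G[OF Rm hm] meas_tfst[of "7 * N"] by measurable
    have e3: "(\<lambda>(u,w). ennreal(u\<^sup>2 * (l1norm w)\<^sup>2)) = (\<lambda>\<omega>. ennreal (q \<omega>))"
      by (rule ext) (simp add: q_def split: prod.splits)
    have e2: "(\<lambda>(u,w). u\<^sup>2 * (l1norm w)\<^sup>2) = q" by (rule ext) (simp add: q_def split: prod.splits)
    have "q \<in> borel_measurable \<rho>" using meas_mom[where 'd='d] bmr by (metis e2)
    hence qm: "(\<lambda>\<omega>. ennreal (q \<omega>)) \<in> borel_measurable \<rho>"
      by (rule measurable_compose[OF _ measurable_ennreal])
    have tle: "7 * N * t \<omega> \<le> 7/2 * q \<omega> + 7/2 * N\<^sup>2" for \<omega>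
    proof -
      have "0 \<le> (t \<omega> - N)\<^sup>2" by simp
      hence "2 * N * t \<omega> \<le> (t \<omega>)\<^sup>2 + N\<^sup>2" by (simp add: power2_eq_square algebra_simps)
      moreover have "(t \<omega>)\<^sup>2 = q \<omega>" by (simp add: t_def q_def power_mult_distrib)
      ultimately show ?thesis by simp
    qed
    have Et: "(\<integral>\<^sup>+\<omega>. ennreal (7 * N * t \<omega>) \<partial>\<rho>) \<le> ennreal (7/2 * M + 7/2 * N\<^sup>2)"
    proof -
      have "(\<integral>\<^sup>+\<omega>. ennreal (7 * N * t \<omega>) \<partial>\<rho>) \<le> (\<integral>\<^sup>+\<omega>. ennreal (7/2) * ennreal (q \<omega>) + ennreal (7/2 * N\<^sup>2) \<partial>\<rho>)"
        using tle by (intro nn_integral_mono) (simp add: q_def ennreal_plus[symmetric] ennreal_mult[symmetric] del: ennreal_plus)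
      also have "\<dots> = ennreal (7/2) * (\<integral>\<^sup>+\<omega>. ennreal (q \<omega>) \<partial>\<rho>) + ennreal (7/2 * N\<^sup>2)"
        using qm by (simp add: nn_integral_add nn_integral_cmult P.emeasure_space_1)
      also have "(\<integral>\<^sup>+\<omega>. ennreal (q \<omega>) \<partial>\<rho>) = ennreal M" using mom e3 by simp
      finally show ?thesis using M0 by (simp add: ennreal_plus[symmetric] ennreal_mult[symmetric] del: ennreal_plus)
    qed
    have inner: "AE x in \<mu>. (\<integral>\<^sup>+\<omega>. G \<omega> x \<partial>\<rho>) \<le> ennreal ((R x)\<^sup>2 + K)"
      using ae
    proof eventually_elim
      case (elim x)
      have "(\<integral>\<^sup>+\<omega>. G \<omega> x \<partial>\<rho>) = (\<integral>\<^sup>+\<omega>. ennreal ((R x + fst \<omega> * relu (snd \<omega> \<bullet> x) - h x)\<^sup>2) \<partial>\<rho>)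
            + (\<integral>\<^sup>+\<omega>. ennreal (7 * N * t \<omega>) \<partial>\<rho>)"
        unfolding G_def
        by (rule nn_integral_add) (use meas_sqw bmr meas_tw[where 'd='d] in \<open>auto simp: t_def\<close>)
      also have "\<dots> \<le> ennreal ((R x)\<^sup>2 + M) + ennreal (7/2 * M + 7/2 * N\<^sup>2)"
        using maurey_point[OF \<rho>, of x "h x" M "R x"] elim mom M0 Et by (intro add_mono) auto
      also have "\<dots> = ennreal ((R x)\<^sup>2 + K)"
        using M0 by (simp add: K_def ennreal_plus[symmetric] del: ennreal_plus)
      finally show ?case .
    qed
    have "(\<integral>\<^sup>+\<omega>. (\<integral>\<^sup>+x. G \<omega> x \<partial>\<mu>) \<partial>\<rho>) = (\<integral>\<^sup>+x. (\<integral>\<^sup>+\<omega>. G \<omega> x \<partial>\<rho>) \<partial>\<mu>)"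
      using PQ.Fubini'[OF Gm] by simp
    also have "\<dots> \<le> (\<integral>\<^sup>+x. ennreal ((R x)\<^sup>2) + ennreal K \<partial>\<mu>)"
      by (intro nn_integral_mono_AE) (use inner K0 in \<open>auto simp: ennreal_plus\<close>)
    also have "\<dots> = A + ennreal K"
    proof -
      have "(\<lambda>x. ennreal ((R x)\<^sup>2)) \<in> borel_measurable \<mu>" unfolding bmm using Rm by measurable
      thus ?thesis by (simp add: nn_integral_add Q.emeasure_space_1 A_def)
    qed
    finally have int_le: "(\<integral>\<^sup>+\<omega>. (\<integral>\<^sup>+x. G \<omega> x \<partial>\<mu>) \<partial>\<rho>) \<le> A + ennreal K" .
    have "\<exists>\<omega>. (\<integral>\<^sup>+x. G \<omega> x \<partial>\<mu>) \<le> A + ennreal (8 * N\<^sup>2)"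
    proof (rule ccontr)
      assume "\<not> ?thesis"
      hence lt: "A + ennreal (8 * N\<^sup>2) \<le> (\<integral>\<^sup>+x. G \<omega> x \<partial>\<mu>)" for \<omega> by (metis not_le less_imp_le)
      have "A + ennreal (8 * N\<^sup>2) = (\<integral>\<^sup>+\<omega>. A + ennreal (8 * N\<^sup>2) \<partial>\<rho>)"
        by (simp add: P.emeasure_space_1)
      also have "\<dots> \<le> (\<integral>\<^sup>+\<omega>. (\<integral>\<^sup>+x. G \<omega> x \<partial>\<mu>) \<partial>\<rho>)" by (intro nn_integral_mono lt)
      also note int_le
      finally have "ennreal (8 * N\<^sup>2) \<le> ennreal K"
        using False by (auto simp: ennreal_add_left_cancel_le top.not_eq_extremum)
      thus False using K K0 by simp
    qed
    then obtain \<omega> where om: "(\<integral>\<^sup>+x. G \<omega> x \<partial>\<mu>) \<le> A + ennreal (8 * N\<^sup>2)" by blast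
    have "(\<integral>\<^sup>+x. G \<omega> x \<partial>\<mu>) = (\<integral>\<^sup>+x. ennreal ((R x + fst \<omega> * relu (snd \<omega> \<bullet> x) - h x)\<^sup>2) \<partial>\<mu>) + ennreal (7 * N * t \<omega>)"
    proof -
      have mx: "(\<lambda>x. ennreal ((R x + fst \<omega> * relu (snd \<omega> \<bullet> x) - h x)\<^sup>2)) \<in> borel_measurable \<mu>"
        unfolding bmm by (rule meas_sqx[OF Rm hm])
      show ?thesis unfolding G_def by (subst nn_integral_add[OF mx]) (auto simp: Q.emeasure_space_1)
    qed
    with om show ?thesis unfolding A_def t_def by (intro exI[of _ "fst \<omega>"] exI[of _ "snd \<omega>"]) simp
  qed
qed

lemma meas_Sx: "(\<lambda>x::real^'d::finite. \<Sum>k<j. us k * relu (ws k \<bullet> x)) \<in> borel_measurable borel"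
  using meas_x[where 'd='d, measurable] by measurable

lemma maurey_iter:
  fixes \<rho> :: "(real \<times> (real^'d::finite)) measure" and \<mu> :: "(real^'d) measure"
  assumes \<rho>: "prob_space \<rho>" "sets \<rho> = sets borel"
   and \<mu>: "prob_space \<mu>" "sets \<mu> = sets borel"
   and hm: "h \<in> borel_measurable borel"
   and ae: "AE x in \<mu>. (\<forall>i. 0 \<le> x$i \<and> x$i \<le> 1) \<and> integrable \<rho> (\<lambda>(u,w). u * relu(w \<bullet> x))
              \<and> h x = (\<integral>(u,w). u * relu(w \<bullet> x) \<partial>\<rho>)"
   and mom: "(\<integral>\<^sup>+(u,w). ennreal(u\<^sup>2 * (l1norm w)\<^sup>2) \<partial>\<rho>) = ennreal M"
   and M0: "0 \<le> M" and MN: "M < N\<^sup>2" and N: "0 < N"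
  shows "\<exists>us ws. (\<integral>\<^sup>+x. ennreal (((\<Sum>k<j. us k * relu (ws k \<bullet> x)) - real j * h x)\<^sup>2) \<partial>\<mu>)
            + ennreal (7 * N * (\<Sum>k<j. \<bar>us k\<bar> * l1norm (ws k))) \<le> ennreal (real j * 8 * N\<^sup>2)"
proof (induction j)
  case 0
  then show ?case by simp
next
  case (Suc j)
  then obtain us ws where IH: "(\<integral>\<^sup>+x. ennreal (((\<Sum>k<j. us k * relu (ws k \<bullet> x)) - real j * h x)\<^sup>2) \<partial>\<mu>)
            + ennreal (7 * N * (\<Sum>k<j. \<bar>us k\<bar> * l1norm (ws k))) \<le> ennreal (real j * 8 * N\<^sup>2)" by blast
  define R where "R = (\<lambda>x. (\<Sum>k<j. us k * relu (ws k \<bullet> x)) - real j * h x)"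
  have Rm: "R \<in> borel_measurable borel" unfolding R_def using meas_Sx[where j=j and us=us and ws=ws, measurable] hm by measurable
  obtain u w where st: "(\<integral>\<^sup>+x. ennreal ((R x + u * relu (w \<bullet> x) - h x)\<^sup>2) \<partial>\<mu>) + ennreal (7 * N * (\<bar>u\<bar> * l1norm w))
          \<le> (\<integral>\<^sup>+x. ennreal ((R x)\<^sup>2) \<partial>\<mu>) + ennreal (8 * N\<^sup>2)"
    using maurey_step[OF \<rho> \<mu> hm Rm ae mom M0 MN N] by blast
  define us' where "us' = us(j := u)"
  define ws' where "ws' = ws(j := w)"
  have s1: "(\<Sum>k<Suc j. us' k * relu (ws' k \<bullet> x)) - real (Suc j) * h x = R x + u * relu (w \<bullet> x) - h x" for x
  proof -
    have "(\<Sum>k<j. us' k * relu (ws' k \<bullet> x)) = (\<Sum>k<j. us k * relu (ws k \<bullet> x))"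
      by (rule sum.cong) (auto simp: us'_def ws'_def)
    thus ?thesis by (simp add: R_def us'_def ws'_def algebra_simps)
  qed
  have s2: "(\<Sum>k<Suc j. \<bar>us' k\<bar> * l1norm (ws' k)) = (\<Sum>k<j. \<bar>us k\<bar> * l1norm (ws k)) + \<bar>u\<bar> * l1norm w"
  proof -
    have "(\<Sum>k<j. \<bar>us' k\<bar> * l1norm (ws' k)) = (\<Sum>k<j. \<bar>us k\<bar> * l1norm (ws k))"
      by (rule sum.cong) (auto simp: us'_def ws'_def)
    thus ?thesis by (simp add: us'_def ws'_def)
  qed
  have l1nn: "0 \<le> l1norm v" for v :: "real^'d" by (simp add: l1norm_def sum_nonneg)
  have T0: "0 \<le> (\<Sum>k<j. \<bar>us k\<bar> * l1norm (ws k))" by (intro sum_nonneg) (simp add: l1nn)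
  have t0: "0 \<le> \<bar>u\<bar> * l1norm w" by (simp add: l1nn)
  have "(\<integral>\<^sup>+x. ennreal (((\<Sum>k<Suc j. us' k * relu (ws' k \<bullet> x)) - real (Suc j) * h x)\<^sup>2) \<partial>\<mu>)
            + ennreal (7 * N * (\<Sum>k<Suc j. \<bar>us' k\<bar> * l1norm (ws' k)))
      = ((\<integral>\<^sup>+x. ennreal ((R x + u * relu (w \<bullet> x) - h x)\<^sup>2) \<partial>\<mu>) + ennreal (7 * N * (\<bar>u\<bar> * l1norm w)))
         + ennreal (7 * N * (\<Sum>k<j. \<bar>us k\<bar> * l1norm (ws k)))"
    unfolding s1 s2 using N T0 t0
    by (simp add: distrib_left ennreal_plus[symmetric] del: ennreal_plus)
  also have "\<dots> \<le> ((\<integral>\<^sup>+x. ennreal ((R x)\<^sup>2) \<partial>\<mu>) + ennreal (8 * N\<^sup>2)) + ennreal (7 * N * (\<Sum>k<j. \<bar>us k\<bar> * l1norm (ws k)))"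
    using st by (rule add_right_mono)
  also have "\<dots> = ((\<integral>\<^sup>+x. ennreal ((R x)\<^sup>2) \<partial>\<mu>) + ennreal (7 * N * (\<Sum>k<j. \<bar>us k\<bar> * l1norm (ws k)))) + ennreal (8 * N\<^sup>2)"
    by (simp add: algebra_simps)
  also have "\<dots> \<le> ennreal (real j * 8 * N\<^sup>2) + ennreal (8 * N\<^sup>2)"
    using IH unfolding R_def by (rule add_right_mono)
  also have "\<dots> = ennreal (real (Suc j) * 8 * N\<^sup>2)"
    by (simp add: ennreal_plus[symmetric] algebra_simps del: ennreal_plus)
  finally show ?case by blast
qed

lemma maurey:
  fixes \<rho> :: "(real \<times> (real^'d::finite)) measure" and \<mu> :: "(real^'d) measure"
  assumes \<rho>: "prob_space \<rho>" "sets \<rho> = sets borel"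
   and \<mu>: "prob_space \<mu>" "sets \<mu> = sets borel"
   and hm: "h \<in> borel_measurable borel"
   and ae: "AE x in \<mu>. (\<forall>i. 0 \<le> x$i \<and> x$i \<le> 1) \<and> integrable \<rho> (\<lambda>(u,w). u * relu(w \<bullet> x))
              \<and> h x = (\<integral>(u,w). u * relu(w \<bullet> x) \<partial>\<rho>)"
   and mom: "(\<integral>\<^sup>+(u,w). ennreal(u\<^sup>2 * (l1norm w)\<^sup>2) \<partial>\<rho>) = ennreal M"
   and M0: "0 \<le> M" and MN: "M < N\<^sup>2" and N: "0 < N" and m: "0 < m"
  shows "\<exists>us ws. (\<integral>\<^sup>+x. ennreal (((\<Sum>k<m. us k / real m * relu (ws k \<bullet> x)) - h x)\<^sup>2) \<partial>\<mu>) \<le> ennreal (8 * N\<^sup>2 / real m)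
              \<and> (\<Sum>k<m. \<bar>us k\<bar> * l1norm (ws k)) / real m \<le> 8 * N / 7"
proof -
  obtain us ws where it: "(\<integral>\<^sup>+x. ennreal (((\<Sum>k<m. us k * relu (ws k \<bullet> x)) - real m * h x)\<^sup>2) \<partial>\<mu>)
            + ennreal (7 * N * (\<Sum>k<m. \<bar>us k\<bar> * l1norm (ws k))) \<le> ennreal (real m * 8 * N\<^sup>2)"
    using maurey_iter[OF \<rho> \<mu> hm ae mom M0 MN N] by blast
  have l1nn: "0 \<le> l1norm v" for v :: "real^'d" by (simp add: l1norm_def sum_nonneg)
  have T0: "0 \<le> (\<Sum>k<m. \<bar>us k\<bar> * l1norm (ws k))" by (intro sum_nonneg) (simp add: l1nn)
  have a: "(\<integral>\<^sup>+x. ennreal (((\<Sum>k<m. us k * relu (ws k \<bullet> x)) - real m * h x)\<^sup>2) \<partial>\<mu>) \<le> ennreal (real m * 8 * N\<^sup>2)"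
    using it by (rule order_trans[rotated]) simp
  have b: "ennreal (7 * N * (\<Sum>k<m. \<bar>us k\<bar> * l1norm (ws k))) \<le> ennreal (real m * 8 * N\<^sup>2)"
    using it by (rule order_trans[rotated]) simp
  have mpos: "0 < real m" using m by simp
  have eq: "((\<Sum>k<m. us k / real m * relu (ws k \<bullet> x)) - h x)\<^sup>2
      = (1 / (real m)\<^sup>2) * ((\<Sum>k<m. us k * relu (ws k \<bullet> x)) - real m * h x)\<^sup>2" for x
  proof -
    have "(\<Sum>k<m. us k / real m * relu (ws k \<bullet> x)) = (\<Sum>k<m. us k * relu (ws k \<bullet> x)) / real m"
      by (simp add: sum_divide_distrib)
    moreover have "(\<Sum>k<m. us k * relu (ws k \<bullet> x)) / real m - h x = ((\<Sum>k<m. us k * relu (ws k \<bullet> x)) - real m * h x) / real m"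
      using mpos by (simp add: field_simps)
    ultimately show ?thesis by (simp add: power_divide)
  qed
  have "(\<integral>\<^sup>+x. ennreal (((\<Sum>k<m. us k / real m * relu (ws k \<bullet> x)) - h x)\<^sup>2) \<partial>\<mu>)
      = ennreal (1 / (real m)\<^sup>2) * (\<integral>\<^sup>+x. ennreal (((\<Sum>k<m. us k * relu (ws k \<bullet> x)) - real m * h x)\<^sup>2) \<partial>\<mu>)"
  proof -
    have bmm: "borel_measurable \<mu> = borel_measurable borel"
      by (rule measurable_cong_sets) (use \<mu> in auto)
    have fm: "(\<lambda>x. ennreal (((\<Sum>k<m. us k * relu (ws k \<bullet> x)) - real m * h x)\<^sup>2)) \<in> borel_measurable \<mu>"
      unfolding bmm using meas_Sx[where j=m and us=us and ws=ws, measurable] hm by measurable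
    have "(\<integral>\<^sup>+x. ennreal (((\<Sum>k<m. us k / real m * relu (ws k \<bullet> x)) - h x)\<^sup>2) \<partial>\<mu>)
       = (\<integral>\<^sup>+x. ennreal (1 / (real m)\<^sup>2) * ennreal (((\<Sum>k<m. us k * relu (ws k \<bullet> x)) - real m * h x)\<^sup>2) \<partial>\<mu>)"
      unfolding eq by (intro nn_integral_cong) (simp add: ennreal_mult[symmetric])
    also have "\<dots> = ennreal (1 / (real m)\<^sup>2) * (\<integral>\<^sup>+x. ennreal (((\<Sum>k<m. us k * relu (ws k \<bullet> x)) - real m * h x)\<^sup>2) \<partial>\<mu>)"
      by (rule nn_integral_cmult[OF fm])
    finally show ?thesis .
  qed
  also have "\<dots> \<le> ennreal (1 / (real m)\<^sup>2) * ennreal (real m * 8 * N\<^sup>2)"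
    by (rule mult_left_mono[OF a]) simp
  also have "\<dots> = ennreal (8 * N\<^sup>2 / real m)"
  proof -
    have "1 / (real m)\<^sup>2 * (real m * 8 * N\<^sup>2) = 8 * N\<^sup>2 / real m" using mpos by (simp add: power2_eq_square field_simps)
    thus ?thesis using mpos by (simp add: ennreal_mult[symmetric] del: ennreal_mult')
  qed
  finally have A: "(\<integral>\<^sup>+x. ennreal (((\<Sum>k<m. us k / real m * relu (ws k \<bullet> x)) - h x)\<^sup>2) \<partial>\<mu>) \<le> ennreal (8 * N\<^sup>2 / real m)" .
  have "7 * N * (\<Sum>k<m. \<bar>us k\<bar> * l1norm (ws k)) \<le> real m * 8 * N\<^sup>2"
    using b mpos N by (simp add: ennreal_le_iff)
  hence B: "(\<Sum>k<m. \<bar>us k\<bar> * l1norm (ws k)) / real m \<le> 8 * N / 7"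
    using mpos N by (simp add: field_simps power2_eq_square)
  from A B show ?thesis by blast
qed

definition mkW :: "('d::finite \<Rightarrow> nat) \<Rightarrow> nat \<Rightarrow> nat \<Rightarrow> nat \<Rightarrow> (nat \<Rightarrow> nat \<Rightarrow> real^'d) \<Rightarrow> nat \<Rightarrow> nat \<Rightarrow> nat \<Rightarrow> real" where
  "mkW e m \<alpha> dd ws l k p =
    (if l = 1 then (if k < 2^\<alpha> * m \<and> p < dd then ws (k div m) (k mod m) $ (inv e p) else 0)
     else if 2 \<le> l \<and> l \<le> \<alpha> + 1 then
       (if k < 2^(\<alpha> - (l - 1)) then
          (if p = dd + 2^\<alpha> + (k * 2^(l - 1) + 2^(l - 2)) then 1
           else if p = dd + 2^\<alpha> + k * 2^(l - 1) then -1 else 0)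
        else 0)
     else 0)"

definition mkU :: "nat \<Rightarrow> nat \<Rightarrow> nat \<Rightarrow> (nat \<Rightarrow> nat \<Rightarrow> real) \<Rightarrow> nat \<Rightarrow> nat \<Rightarrow> nat \<Rightarrow> real" where
  "mkU m \<alpha> dd us l i k =
    (if l = 1 then (if k < 2^\<alpha> * m \<and> (i = dd + k div m \<or> i = dd + 2^\<alpha> + k div m) then us (k div m) (k mod m) / real m else 0)
     else if 2 \<le> l \<and> l \<le> \<alpha> + 1 then
       (if k < 2^(\<alpha> - (l - 1)) \<and> i = dd + 2^\<alpha> + k * 2^(l - 1) then 1 else 0)
     else 0)"

definition mkV :: "('d::finite \<Rightarrow> nat) \<Rightarrow> nat \<Rightarrow> 'd \<Rightarrow> real" where
  "mkV e i j = (if i = e j then 1 else 0)"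

definition mkOut :: "nat \<Rightarrow> nat \<Rightarrow> real \<Rightarrow> nat \<Rightarrow> nat \<Rightarrow> real" where
  "mkOut dd \<alpha> c b0 i = (if i = dd + b0 then 1 else 0) + (if i = dd + 2^\<alpha> then c else 0)"

definition mknet :: "('d::finite \<Rightarrow> nat) \<Rightarrow> nat \<Rightarrow> nat \<Rightarrow> real \<Rightarrow> (nat \<Rightarrow> nat \<Rightarrow> real) \<Rightarrow> (nat \<Rightarrow> nat \<Rightarrow> real^'d) \<Rightarrow> nat \<Rightarrow> 'd resnet" where
  "mknet e m \<alpha> c us ws b0 = ResNet (mkOut CARD('d) \<alpha> c b0) (mkV e) (mkW e m \<alpha> CARD('d) ws) (mkU m \<alpha> CARD('d) us)"

lemma mknet_sel[simp]:
  fixes e :: "'d::finite \<Rightarrow> nat"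
  shows
  "out_w (mknet e m \<alpha> c us ws b0) = mkOut CARD('d) \<alpha> c b0"
  "in_w (mknet e m \<alpha> c us ws b0) = mkV e"
  "W_w (mknet e m \<alpha> c us ws b0) = mkW e m \<alpha> CARD('d) ws"
  "U_w (mknet e m \<alpha> c us ws b0) = mkU m \<alpha> CARD('d) us"
  by (simp_all add: mknet_def)

definition gfun :: "nat \<Rightarrow> (nat \<Rightarrow> nat \<Rightarrow> real) \<Rightarrow> (nat \<Rightarrow> nat \<Rightarrow> real^'d::finite) \<Rightarrow> nat \<Rightarrow> real^'d \<Rightarrow> real" where
  "gfun m us ws b x = (\<Sum>k<m. us b k / real m * relu (ws b k \<bullet> x))"

lemma block_sum:
  fixes F :: "nat \<Rightarrow> real"
  assumes "b < n" "n * m \<le> mw"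
  shows "(\<Sum>k<mw. if k < n * m \<and> k div m = b then F (k mod m) else 0) = (\<Sum>k<m. F k)"
proof -
  have "(\<Sum>k<mw. if k < n * m \<and> k div m = b then F (k mod m) else 0)
      = (\<Sum>k\<in>{k\<in>{..<mw}. k < n * m \<and> k div m = b}. F (k mod m))"
    by (rule sum.inter_filter[symmetric]) simp
  also have "{k\<in>{..<mw}. k < n * m \<and> k div m = b} = (\<lambda>k. b * m + k) ` {..<m}"
  proof (cases "m = 0")
    case True then show ?thesis by simp
  next
    case False
    show ?thesis
    proof safe
      fix k assume k: "k < mw" "k < n * m" "b = k div m"
      show "k \<in> (\<lambda>j. k div m * m + j) ` {..<m}"
      proof (rule image_eqI[of _ _ "k mod m"])
        show "k = k div m * m + k mod m" by simp
        show "k mod m \<in> {..<m}" using False by simp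
      qed
    next
      fix k assume "k < m"
      moreover have "b * m + k < n * m"
      proof -
        have "b * m + k < b * m + m" using \<open>k < m\<close> by simp
        also have "\<dots> = (b + 1) * m" by simp
        also have "\<dots> \<le> n * m" using assms(1) by (intro mult_right_mono) auto
        finally show ?thesis .
      qed
      ultimately show "b * m + k < mw" "b * m + k < n * m" "(b * m + k) div m = b"
        using assms(2) False by auto
    qed
  qed
  also have "(\<Sum>k\<in>(\<lambda>k. b * m + k) ` {..<m}. F (k mod m)) = (\<Sum>k<m. F ((b * m + k) mod m))"
    by (subst sum.reindex) (auto simp: inj_on_def)
  also have "\<dots> = (\<Sum>k<m. F k)" by (rule sum.cong) auto
  finally show ?thesis .
qed

lemma group_sum:
  fixes F :: "nat \<Rightarrow> nat \<Rightarrow> real"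
  shows "(\<Sum>k<n * m. F (k div m) (k mod m)) = (\<Sum>b<n. \<Sum>k<m. F b k)"
proof -
  have "(\<Sum>k<n * m. F (k div m) (k mod m)) = (\<Sum>k<n * m. \<Sum>b<n. if k < n * m \<and> k div m = b then F b (k mod m) else 0)"
  proof (rule sum.cong[OF refl])
    fix k assume k: "k \<in> {..<n * m}"
    hence "k div m < n" by (simp add: div_less_iff_less_mult mult.commute) (metis less_mult_imp_div_less mult.commute)
    thus "F (k div m) (k mod m) = (\<Sum>b<n. if k < n * m \<and> k div m = b then F b (k mod m) else 0)"
      using k by (simp add: sum.delta' if_distrib cong: if_cong)
  qed
  also have "\<dots> = (\<Sum>b<n. \<Sum>k<n * m. if k < n * m \<and> k div m = b then F b (k mod m) else 0)"
    by (rule sum.swap)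
  also have "\<dots> = (\<Sum>b<n. \<Sum>k<m. F b k)"
    by (rule sum.cong[OF refl]) (rule block_sum, auto)
  finally show ?thesis .
qed

definition Vf :: "(nat \<Rightarrow> real) \<Rightarrow> nat \<Rightarrow> nat \<Rightarrow> real" where
  "Vf g lv i = Max (g ` {i..<i + 2^lv})"

lemma Vf0: "Vf g 0 i = g i" by (simp add: Vf_def)

lemma Vf_step: "0 < l \<Longrightarrow> Vf g l i = max (Vf g (l - 1) i) (Vf g (l - 1) (i + 2^(l-1)))"
proof -
  assume l: "0 < l"
  have p: "(2::nat)^l = 2^(l-1) + 2^(l-1)" using l by (cases l) auto
  have "{i..<i + 2^l} = {i..<i + 2^(l-1)} \<union> {i + 2^(l-1)..<i + 2^(l-1) + 2^(l-1)}"
    using p by auto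
  hence "g ` {i..<i + 2^l} = g ` {i..<i + 2^(l-1)} \<union> g ` {i + 2^(l-1)..<i + 2^(l-1) + 2^(l-1)}" by auto
  thus ?thesis unfolding Vf_def by (simp add: Max_Un)
qed

context
  fixes e :: "'d::finite \<Rightarrow> nat" and m \<alpha> mw :: nat and c :: real
    and us :: "nat \<Rightarrow> nat \<Rightarrow> real" and ws :: "nat \<Rightarrow> nat \<Rightarrow> real^'d"
  assumes e: "bij_betw e UNIV {0..<CARD('d)}" and m: "0 < m" and mw: "2^\<alpha> * m \<le> mw"
begin

lemma e_lt: "e j < CARD('d)" using e by (auto simp: bij_betw_def)
lemma e_inj: "inj e" using e by (auto simp: bij_betw_def)
lemma inv_e: "p < CARD('d) \<Longrightarrow> e (inv e p) = p"
  using e by (metis atLeastLessThan_iff bij_betw_inv_into_right zero_le)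
lemma inv_e': "inv e (e j) = j" using e_inj by simp

lemma h0: "hidden mw D (mknet e m \<alpha> c us ws b0) x 0 p = (if p < CARD('d) then x $ inv e p else 0)"
proof -
  have "hidden mw D (mknet e m \<alpha> c us ws b0) x 0 p = (\<Sum>j\<in>UNIV. (if p = e j then 1 else 0) * x $ j)"
    by (simp add: mkV_def)
  also have "\<dots> = (\<Sum>j\<in>UNIV. if j = inv e p \<and> p < CARD('d) then x $ j else 0)"
    by (rule sum.cong) (auto simp: inv_e' e_lt inv_e)
  also have "\<dots> = (if p < CARD('d) then x $ inv e p else 0)"
    by (cases "p < CARD('d)") (auto simp: sum.delta')
  finally show ?thesis .
qed

lemma inner1:
  assumes k: "k < 2^\<alpha> * m" and D: "CARD('d) \<le> D"
  shows "(\<Sum>q<D. mkW e m \<alpha> CARD('d) ws 1 k q * hidden mw D (mknet e m \<alpha> c us ws b0) x 0 q) = ws (k div m) (k mod m) \<bullet> x"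
proof -
  have "(\<Sum>q<D. mkW e m \<alpha> CARD('d) ws 1 k q * hidden mw D (mknet e m \<alpha> c us ws b0) x 0 q)
     = (\<Sum>q<D. if q < CARD('d) then ws (k div m) (k mod m) $ inv e q * x $ inv e q else 0)"
    by (rule sum.cong) (auto simp: mkW_def h0 k simp del: hidden.simps(1))
  also have "\<dots> = (\<Sum>q\<in>{..<CARD('d)}. ws (k div m) (k mod m) $ inv e q * x $ inv e q)"
    using D by (subst sum.inter_filter[symmetric]) (auto intro!: sum.cong)
  also have "{..<CARD('d)} = e ` UNIV" using e by (auto simp: bij_betw_def lessThan_atLeast0)
  also have "(\<Sum>q\<in>e ` UNIV. ws (k div m) (k mod m) $ inv e q * x $ inv e q) = (\<Sum>j\<in>UNIV. ws (k div m) (k mod m) $ j * x $ j)"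
    by (subst sum.reindex[OF e_inj]) (simp add: inv_e')
  finally show ?thesis by (simp add: inner_vec_def)
qed

lemma h1:
  assumes b: "b < 2^\<alpha>" and D: "CARD('d) + 2 * 2^\<alpha> \<le> D"
  shows "hidden mw D (mknet e m \<alpha> c us ws b0) x 1 (CARD('d) + b) = gfun m us ws b x"
    and "hidden mw D (mknet e m \<alpha> c us ws b0) x 1 (CARD('d) + 2^\<alpha> + b) = gfun m us ws b x"
proof -
  let ?h = "hidden mw D (mknet e m \<alpha> c us ws b0) x"
  have inn: "\<And>k. k < 2^\<alpha> * m \<Longrightarrow> (\<Sum>q<D. mkW e m \<alpha> CARD('d) ws 1 k q * ?h 0 q) = ws (k div m) (k mod m) \<bullet> x"
    using inner1 D by simp
  have inn': "\<And>k. k < 2^\<alpha> * m \<Longrightarrow> (\<Sum>q<D. mkW e m \<alpha> CARD('d) ws (Suc 0) k q * ?h 0 q) = ws (k div m) (k mod m) \<bullet> x"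
    using inn by simp
  have "?h 1 (CARD('d) + b) = (\<Sum>k<mw. mkU m \<alpha> CARD('d) us 1 (CARD('d) + b) k * relu (\<Sum>q<D. mkW e m \<alpha> CARD('d) ws 1 k q * ?h 0 q))"
    by (simp add: h0 del: hidden.simps(1))
  also have "\<dots> = (\<Sum>k<mw. if k < 2^\<alpha> * m \<and> k div m = b then us b (k mod m) / real m * relu (ws b (k mod m) \<bullet> x) else 0)"
    by (rule sum.cong) (use b in \<open>auto simp: mkU_def inn inn' simp del: hidden.simps(1)\<close>)
  also have "\<dots> = gfun m us ws b x"
    unfolding gfun_def by (rule block_sum[OF b mw])
  finally show "?h 1 (CARD('d) + b) = gfun m us ws b x" .
  have lt: "k < 2^\<alpha> * m \<Longrightarrow> k div m < 2^\<alpha>" for k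
    using m by (simp add: div_less_iff_less_mult mult.commute)
  have "?h 1 (CARD('d) + 2^\<alpha> + b) = (\<Sum>k<mw. mkU m \<alpha> CARD('d) us 1 (CARD('d) + 2^\<alpha> + b) k * relu (\<Sum>q<D. mkW e m \<alpha> CARD('d) ws 1 k q * ?h 0 q))"
    by (simp add: h0 del: hidden.simps(1))
  also have "\<dots> = (\<Sum>k<mw. if k < 2^\<alpha> * m \<and> k div m = b then us b (k mod m) / real m * relu (ws b (k mod m) \<bullet> x) else 0)"
    by (rule sum.cong) (use b in \<open>auto simp: mkU_def inn inn' dest: lt simp del: hidden.simps(1)\<close>)
  also have "\<dots> = gfun m us ws b x"
    unfolding gfun_def by (rule block_sum[OF b mw])
  finally show "?h 1 (CARD('d) + 2^\<alpha> + b) = gfun m us ws b x" .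
qed

end

lemma relu_max: "a + relu (b - a) = max a (b::real)" by (simp add: relu_def max_def)

lemma mkU_lay: "1 \<le> l \<Longrightarrow> l \<le> \<alpha> \<Longrightarrow> mkU m \<alpha> dd us (Suc l) i' k = (if k < 2^(\<alpha>-l) \<and> i' = dd + 2^\<alpha> + k*2^l then 1 else 0)"
  by (simp add: mkU_def)

lemma mkW_lay: "1 \<le> l \<Longrightarrow> l \<le> \<alpha> \<Longrightarrow> mkW e m \<alpha> dd ws (Suc l) k q =
   (if k < 2^(\<alpha>-l) then (if q = dd+2^\<alpha>+(k*2^l + 2^(l-1)) then 1 else if q = dd+2^\<alpha>+k*2^l then -1 else 0) else 0)"
  by (simp add: mkW_def numeral_2_eq_2)

lemma sum_two:
  fixes H :: "nat \<Rightarrow> real"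
  assumes "q1 \<noteq> q2" "q1 < D" "q2 < D"
  shows "(\<Sum>q<D. (if q = q1 then 1 else if q = q2 then -1 else 0) * H q) = H q1 - H q2"
proof -
  have "(\<Sum>q<D. (if q = q1 then 1 else if q = q2 then -1 else 0) * H q) = (\<Sum>q<D. (if q = q1 then H q1 else 0) - (if q = q2 then H q2 else 0))"
    by (rule sum.cong) (use assms in auto)
  also have "\<dots> = H q1 - H q2" using assms by (simp add: sum_subtractf)
  finally show ?thesis .
qed

context
  fixes e :: "'d::finite \<Rightarrow> nat" and m \<alpha> mw :: nat and c :: real
    and us :: "nat \<Rightarrow> nat \<Rightarrow> real" and ws :: "nat \<Rightarrow> nat \<Rightarrow> real^'d"
  assumes e: "bij_betw e UNIV {0..<CARD('d)}" and m: "0 < m" and mw: "2^\<alpha> * m \<le> mw"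
begin

lemma hstep:
  assumes l: "1 \<le> l" "l \<le> \<alpha>" and D: "CARD('d) + 2 * 2^\<alpha> \<le> D"
    and IHG: "\<forall>b<2^\<alpha>. hidden mw D (mknet e m \<alpha> c us ws b0) x l (CARD('d) + b) = g b"
    and IHM: "\<forall>i<2^\<alpha>. 2^(l-1) dvd i \<longrightarrow> hidden mw D (mknet e m \<alpha> c us ws b0) x l (CARD('d) + 2^\<alpha> + i) = Vf g (l-1) i"
  shows "\<forall>b<2^\<alpha>. hidden mw D (mknet e m \<alpha> c us ws b0) x (Suc l) (CARD('d) + b) = g b"
    and "\<forall>i<2^\<alpha>. 2^l dvd i \<longrightarrow> hidden mw D (mknet e m \<alpha> c us ws b0) x (Suc l) (CARD('d) + 2^\<alpha> + i) = Vf g l i"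
proof -
  let ?H = "hidden mw D (mknet e m \<alpha> c us ws b0) x"
  let ?dd = "CARD('d)"
  let ?n = "(2::nat)^\<alpha>"
  have HS: "?H (Suc l) p = ?H l p + (\<Sum>k<mw. mkU m \<alpha> ?dd us (Suc l) p k * relu (\<Sum>q<D. mkW e m \<alpha> ?dd ws (Suc l) k q * ?H l q))" for p
    by simp
  show "\<forall>b<?n. ?H (Suc l) (?dd + b) = g b"
  proof (intro allI impI)
    fix b assume b: "b < ?n"
    have "(\<Sum>k<mw. mkU m \<alpha> ?dd us (Suc l) (?dd + b) k * relu (\<Sum>q<D. mkW e m \<alpha> ?dd ws (Suc l) k q * ?H l q)) = 0"
      by (rule sum.neutral) (use b l in \<open>auto simp: mkU_lay\<close>)
    thus "?H (Suc l) (?dd + b) = g b" using HS[of "?dd + b"] IHG b by simp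
  qed
  show "\<forall>i<?n. 2^l dvd i \<longrightarrow> ?H (Suc l) (?dd + ?n + i) = Vf g l i"
  proof (intro allI impI)
    fix i assume i: "i < ?n" "2^l dvd i"
    define k0 where "k0 = i div 2^l"
    have ik: "i = k0 * 2^l" using i(2) by (simp add: k0_def)
    have nsplit: "?n = 2^(\<alpha>-l) * 2^l" using l by (simp flip: power_add)
    have "k0 * 2^l < 2^(\<alpha>-l) * 2^l" using i(1) ik nsplit by simp
    hence k0lt: "k0 < 2^(\<alpha>-l)" by simp
    have "k0 + 1 \<le> 2^(\<alpha>-l)" using k0lt by simp
    hence "(k0 + 1) * 2^l \<le> 2^(\<alpha>-l) * 2^l" by (rule mult_le_mono1)
    hence i2: "i + 2^l \<le> ?n" using ik nsplit by (simp add: algebra_simps)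
    have hl: "(2::nat)^l = 2^(l-1) + 2^(l-1)" using l by (cases l) auto
    have "0 < (2::nat)^(l-1)" by simp
    hence i3: "i + 2^(l-1) < ?n" using i2 hl by linarith
    have k0mw: "k0 < mw"
    proof -
      have "(2::nat)^(\<alpha>-l) \<le> 2^\<alpha>" by (simp add: power_increasing)
      also have "\<dots> \<le> 2^\<alpha> * m" using m by simp
      finally show ?thesis using k0lt mw by linarith
    qed
    have "2^(l-1) dvd (2::nat)^l" by (rule le_imp_power_dvd) simp
    hence dv1: "2^(l-1) dvd i" using i(2) by (rule dvd_trans)
    have dv2: "2^(l-1) dvd i + 2^(l-1)" using dv1 by simp
    have "(\<Sum>k<mw. mkU m \<alpha> ?dd us (Suc l) (?dd + ?n + i) k * relu (\<Sum>q<D. mkW e m \<alpha> ?dd ws (Suc l) k q * ?H l q))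
        = (\<Sum>k<mw. if k = k0 then relu (\<Sum>q<D. mkW e m \<alpha> ?dd ws (Suc l) k0 q * ?H l q) else 0)"
    proof (rule sum.cong[OF refl])
      fix k assume "k \<in> {..<mw}"
      have "(k < 2^(\<alpha>-l) \<and> ?dd + ?n + i = ?dd + ?n + k * 2^l) \<longleftrightarrow> k = k0"
        using ik k0lt by auto
      thus "mkU m \<alpha> ?dd us (Suc l) (?dd + ?n + i) k * relu (\<Sum>q<D. mkW e m \<alpha> ?dd ws (Suc l) k q * ?H l q)
          = (if k = k0 then relu (\<Sum>q<D. mkW e m \<alpha> ?dd ws (Suc l) k0 q * ?H l q) else 0)"
        using l by (simp add: mkU_lay)
    qed
    also have "\<dots> = relu (\<Sum>q<D. mkW e m \<alpha> ?dd ws (Suc l) k0 q * ?H l q)"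
      using k0mw by simp
    also have "(\<Sum>q<D. mkW e m \<alpha> ?dd ws (Suc l) k0 q * ?H l q)
        = (\<Sum>q<D. (if q = ?dd + ?n + (i + 2^(l-1)) then 1 else if q = ?dd + ?n + i then -1 else 0) * ?H l q)"
      using l k0lt by (intro sum.cong refl) (auto simp: mkW_lay ik)
    also have "\<dots> = ?H l (?dd + ?n + (i + 2^(l-1))) - ?H l (?dd + ?n + i)"
      by (rule sum_two) (use i3 D i(1) in auto)
    also have "\<dots> = Vf g (l-1) (i + 2^(l-1)) - Vf g (l-1) i"
      using IHM i3 i(1) dv1 dv2 by (simp add: add.assoc)
    finally have "?H (Suc l) (?dd + ?n + i) = Vf g (l-1) i + relu (Vf g (l-1) (i + 2^(l-1)) - Vf g (l-1) i)"
      using HS[of "?dd + ?n + i"] IHM i(1) dv1 by simp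
    also have "\<dots> = Vf g l i" using l by (simp add: relu_max Vf_step)
    finally show "?H (Suc l) (?dd + ?n + i) = Vf g l i" .
  qed
qed

lemma hall:
  assumes j: "j \<le> \<alpha>" and D: "CARD('d) + 2 * 2^\<alpha> \<le> D"
  shows "(\<forall>b<2^\<alpha>. hidden mw D (mknet e m \<alpha> c us ws b0) x (Suc j) (CARD('d) + b) = gfun m us ws b x)
       \<and> (\<forall>i<2^\<alpha>. 2^j dvd i \<longrightarrow> hidden mw D (mknet e m \<alpha> c us ws b0) x (Suc j) (CARD('d) + 2^\<alpha> + i) = Vf (\<lambda>b. gfun m us ws b x) j i)"
  using j
proof (induction j)
  case 0
  then show ?case using h1[OF e m mw _ D] by (simp add: Vf0)
next
  case (Suc j)
  then have IH: "(\<forall>b<2^\<alpha>. hidden mw D (mknet e m \<alpha> c us ws b0) x (Suc j) (CARD('d) + b) = gfun m us ws b x)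
       \<and> (\<forall>i<2^\<alpha>. 2^(Suc j - 1) dvd i \<longrightarrow> hidden mw D (mknet e m \<alpha> c us ws b0) x (Suc j) (CARD('d) + 2^\<alpha> + i) = Vf (\<lambda>b. gfun m us ws b x) (Suc j - 1) i)"
    by simp
  show ?case using hstep[of "Suc j" D b0 x "\<lambda>b. gfun m us ws b x"] IH Suc.prems D by auto
qed

lemma eval_net:
  assumes b0: "b0 < 2^\<alpha>" and D: "D = CARD('d) + 2 * 2^\<alpha>"
  shows "resnet_eval mw D (\<alpha> + 1) (mknet e m \<alpha> c us ws b0) x = gfun m us ws b0 x + c * Max ((\<lambda>b. gfun m us ws b x) ` {0..<2^\<alpha>})"
proof -
  let ?H = "hidden mw D (mknet e m \<alpha> c us ws b0) x (Suc \<alpha>)"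
  have hh: "\<forall>b<2^\<alpha>. ?H (CARD('d) + b) = gfun m us ws b x"
     "\<forall>i<2^\<alpha>. 2^\<alpha> dvd i \<longrightarrow> ?H (CARD('d) + 2^\<alpha> + i) = Vf (\<lambda>b. gfun m us ws b x) \<alpha> i"
    using hall[of \<alpha> D b0 x] D by auto
  have "resnet_eval mw D (\<alpha> + 1) (mknet e m \<alpha> c us ws b0) x
      = (\<Sum>i<D. (if i = CARD('d) + b0 then ?H i else 0) + (if i = CARD('d) + 2^\<alpha> then c * ?H i else 0))"
    unfolding resnet_eval_def by (rule sum.cong) (auto simp: mkOut_def algebra_simps)
  also have "\<dots> = ?H (CARD('d) + b0) + c * ?H (CARD('d) + 2^\<alpha>)"
    using b0 D by (simp add: sum.distrib)
  also have "\<dots> = gfun m us ws b0 x + c * Vf (\<lambda>b. gfun m us ws b x) \<alpha> 0"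
    using hh(1) b0 hh(2)[rule_format, of 0] by simp
  finally show ?thesis by (simp add: Vf_def)
qed

end

lemma path_row_nonneg: "0 \<le> path_row mw D L \<theta> t p"
  by (induction t arbitrary: p) (auto intro!: add_nonneg_nonneg mult_nonneg_nonneg sum_nonneg)

lemma triple_sum:
  fixes f :: "'i \<Rightarrow> 'k \<Rightarrow> real"
  shows "(\<Sum>j\<in>J. \<Sum>i\<in>I. \<Sum>k\<in>K. f i k * g k j) = (\<Sum>k\<in>K. (\<Sum>i\<in>I. f i k) * (\<Sum>j\<in>J. g k j))"
proof -
  have "(\<Sum>j\<in>J. \<Sum>i\<in>I. \<Sum>k\<in>K. f i k * g k j) = (\<Sum>i\<in>I. \<Sum>j\<in>J. \<Sum>k\<in>K. f i k * g k j)" by (rule sum.swap)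
  also have "\<dots> = (\<Sum>i\<in>I. \<Sum>k\<in>K. \<Sum>j\<in>J. f i k * g k j)" by (intro sum.cong refl sum.swap)
  also have "\<dots> = (\<Sum>k\<in>K. \<Sum>i\<in>I. \<Sum>j\<in>J. f i k * g k j)" by (rule sum.swap)
  also have "\<dots> = (\<Sum>k\<in>K. (\<Sum>i\<in>I. f i k) * (\<Sum>j\<in>J. g k j))" by (simp add: sum_product)
  finally show ?thesis .
qed

lemma sum_le_one_delta:
  fixes f :: "nat \<Rightarrow> real"
  assumes "\<And>k. f k \<le> (if k = kk then 1 else 0)"
  shows "(\<Sum>k<N. f k) \<le> 1"
proof -
  have "(\<Sum>k<N. f k) \<le> (\<Sum>k<N. if k = kk then 1 else 0)" by (rule sum_mono) (rule assms)
  also have "\<dots> \<le> 1" by simp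
  finally show ?thesis .
qed

lemma div_part: "0 < l \<Longrightarrow> (k * 2^l + 2^(l-1)) div (2::nat)^l = k"
proof -
  assume l: "0 < l"
  have "(2::nat)^(l-1) < 2^l" using l by (simp add: power_strict_increasing)
  hence "(2^(l-1) + k * 2^l) div (2::nat)^l = k" by simp
  thus ?thesis by (simp add: add.commute)
qed

context
  fixes e :: "'d::finite \<Rightarrow> nat" and m \<alpha> mw :: nat and c :: real
    and us :: "nat \<Rightarrow> nat \<Rightarrow> real" and ws :: "nat \<Rightarrow> nat \<Rightarrow> real^'d"
  assumes e: "bij_betw e UNIV {0..<CARD('d)}" and m: "0 < m" and mw: "2^\<alpha> * m \<le> mw"
    and c: "0 \<le> c"
begin

lemma colW: "1 \<le> l \<Longrightarrow> l \<le> \<alpha> \<Longrightarrow> (\<Sum>k<mw. \<bar>mkW e m \<alpha> CARD('d) ws (Suc l) k j\<bar>) \<le> 1"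
proof -
  assume l: "1 \<le> l" "l \<le> \<alpha>"
  show ?thesis
  proof (rule sum_le_one_delta[where kk = "(j - CARD('d) - 2^\<alpha>) div 2^l"])
    fix k
    show "\<bar>mkW e m \<alpha> CARD('d) ws (Suc l) k j\<bar> \<le> (if k = (j - CARD('d) - 2^\<alpha>) div 2^l then 1 else 0)"
      using l div_part[of l k] by (auto simp: mkW_lay)
  qed
qed

lemma colU: "1 \<le> l \<Longrightarrow> l \<le> \<alpha> \<Longrightarrow> (\<Sum>i<D. \<bar>mkU m \<alpha> CARD('d) us (Suc l) i k\<bar>) \<le> 1"
proof -
  assume l: "1 \<le> l" "l \<le> \<alpha>"
  show ?thesis
  proof (rule sum_le_one_delta[where kk = "CARD('d) + 2^\<alpha> + k * 2^l"])
    fix i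
    show "\<bar>mkU m \<alpha> CARD('d) us (Suc l) i k\<bar> \<le> (if i = CARD('d) + 2^\<alpha> + k * 2^l then 1 else 0)"
      using l by (auto simp: mkU_lay)
  qed
qed

lemma pr_inv:
  assumes t: "t \<le> \<alpha>" and b0: "b0 < 2^\<alpha>"
  shows "(\<forall>p<CARD('d). path_row mw D (\<alpha> + 1) (mknet e m \<alpha> c us ws b0) t p = 0)
       \<and> (\<forall>p. path_row mw D (\<alpha> + 1) (mknet e m \<alpha> c us ws b0) t p \<le> (1 + c) * 4^t)"
  using t
proof (induction t)
  case 0
  then show ?case using c by (auto simp: mkOut_def)
next
  case (Suc t)
  let ?R = "path_row mw D (\<alpha> + 1) (mknet e m \<alpha> c us ws b0)"
  define l where "l = \<alpha> - t"
  have l: "1 \<le> l" "l \<le> \<alpha>" and lt: "Suc \<alpha> - t = Suc l" using Suc.prems by (auto simp: l_def)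
  have IH1: "\<forall>p<CARD('d). ?R t p = 0" and IH2: "\<forall>p. ?R t p \<le> (1 + c) * 4^t" using Suc by auto
  let ?B = "(1 + c) * 4^t"
  have B0: "0 \<le> ?B" using c by simp
  have RS: "?R (Suc t) j = ?R t j + 3 * (\<Sum>i<D. ?R t i * (\<Sum>k<mw. \<bar>mkU m \<alpha> CARD('d) us (Suc l) i k\<bar> * \<bar>mkW e m \<alpha> CARD('d) ws (Suc l) k j\<bar>))" for j
    by (simp add: lt)
  have col: "(\<Sum>i<D. ?R t i * (\<Sum>k<mw. \<bar>mkU m \<alpha> CARD('d) us (Suc l) i k\<bar> * \<bar>mkW e m \<alpha> CARD('d) ws (Suc l) k j\<bar>)) \<le> ?B" for j
  proof -
    have "(\<Sum>i<D. ?R t i * (\<Sum>k<mw. \<bar>mkU m \<alpha> CARD('d) us (Suc l) i k\<bar> * \<bar>mkW e m \<alpha> CARD('d) ws (Suc l) k j\<bar>))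
        \<le> (\<Sum>i<D. ?B * (\<Sum>k<mw. \<bar>mkU m \<alpha> CARD('d) us (Suc l) i k\<bar> * \<bar>mkW e m \<alpha> CARD('d) ws (Suc l) k j\<bar>))"
      by (intro sum_mono mult_right_mono IH2[rule_format] sum_nonneg) auto
    also have "\<dots> = ?B * (\<Sum>k<mw. (\<Sum>i<D. \<bar>mkU m \<alpha> CARD('d) us (Suc l) i k\<bar>) * \<bar>mkW e m \<alpha> CARD('d) ws (Suc l) k j\<bar>)"
      by (simp add: sum_distrib_left sum_distrib_right sum.swap[where A="{..<D}"] algebra_simps)
    also have "\<dots> \<le> ?B * (\<Sum>k<mw. 1 * \<bar>mkW e m \<alpha> CARD('d) ws (Suc l) k j\<bar>)"
      by (intro mult_left_mono B0 sum_mono mult_right_mono colU l) auto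
    also have "\<dots> \<le> ?B * 1" using colW[OF l, of j] B0 by (intro mult_left_mono) auto
    finally show ?thesis by simp
  qed
  show ?case
  proof (intro conjI allI impI)
    fix p assume p: "p < CARD('d)"
    have "(\<Sum>k<mw. \<bar>mkU m \<alpha> CARD('d) us (Suc l) i k\<bar> * \<bar>mkW e m \<alpha> CARD('d) ws (Suc l) k p\<bar>) = 0" for i
      by (rule sum.neutral) (use p l in \<open>auto simp: mkW_lay\<close>)
    thus "?R (Suc t) p = 0" using RS[of p] IH1 p by simp
  next
    fix p
    have "?R (Suc t) p \<le> ?B + 3 * ?B" unfolding RS[of p] using IH2[rule_format, of p] col[of p] by linarith
    thus "?R (Suc t) p \<le> (1 + c) * 4 ^ Suc t" by simp
  qed
qed

end

lemma sum_lt_restrict: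
  fixes F :: "nat \<Rightarrow> real"
  assumes "N \<le> M"
  shows "(\<Sum>k<M. if k < N then F k else 0) = (\<Sum>k<N. F k)"
proof -
  have "(\<Sum>k<M. if k < N then F k else 0) = (\<Sum>k\<in>{k\<in>{..<M}. k < N}. F k)"
    by (rule sum.inter_filter[symmetric]) simp
  also have "{k\<in>{..<M}. k < N} = {..<N}" using assms by auto
  finally show ?thesis .
qed

context
  fixes e :: "'d::finite \<Rightarrow> nat" and m \<alpha> mw :: nat and c :: real
    and us :: "nat \<Rightarrow> nat \<Rightarrow> real" and ws :: "nat \<Rightarrow> nat \<Rightarrow> real^'d"
  assumes e: "bij_betw e UNIV {0..<CARD('d)}" and m: "0 < m" and mw: "2^\<alpha> * m \<le> mw"
    and c: "0 \<le> c"
begin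

lemma pn_bound:
  assumes b0: "b0 < 2^\<alpha>" and D: "D = CARD('d) + 2 * 2^\<alpha>"
  shows "path_norm mw D (\<alpha> + 1) (mknet e m \<alpha> c us ws b0)
     \<le> 6 * ((1 + c) * 4^\<alpha>) * (\<Sum>b<2^\<alpha>. \<Sum>k<m. \<bar>us b k\<bar> * l1norm (ws b k) / real m)"
proof -
  let ?R = "path_row mw D (\<alpha> + 1) (mknet e m \<alpha> c us ws b0)"
  let ?B = "(1 + c) * 4^\<alpha>"
  let ?U = "\<lambda>i k. \<bar>mkU m \<alpha> CARD('d) us 1 i k\<bar>"
  let ?W = "\<lambda>k j. \<bar>mkW e m \<alpha> CARD('d) ws 1 k (e j)\<bar>"
  have B0: "0 \<le> ?B" using c by simp
  have inv: "\<forall>p<CARD('d). ?R \<alpha> p = 0" "\<forall>p. ?R \<alpha> p \<le> ?B"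
    using pr_inv[OF e m mw c order.refl b0, of D] by auto
  have elt: "e j < CARD('d)" for j using e_lt[OF e m mw] .
  have RS: "?R (Suc \<alpha>) q = ?R \<alpha> q + 3 * (\<Sum>i<D. ?R \<alpha> i * (\<Sum>k<mw. \<bar>mkU m \<alpha> CARD('d) us 1 i k\<bar> * \<bar>mkW e m \<alpha> CARD('d) ws 1 k q\<bar>))" for q
    by simp
  have inner: "\<bar>\<Sum>i<D. ?R (\<alpha> + 1) i * \<bar>in_w (mknet e m \<alpha> c us ws b0) i j\<bar>\<bar> = ?R (Suc \<alpha>) (e j)" for j
  proof -
    have "(\<Sum>i<D. ?R (\<alpha> + 1) i * \<bar>in_w (mknet e m \<alpha> c us ws b0) i j\<bar>) = (\<Sum>i<D. if i = e j then ?R (Suc \<alpha>) (e j) else 0)"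
      by (rule sum.cong) (auto simp: mkV_def)
    also have "\<dots> = ?R (Suc \<alpha>) (e j)" using elt[of j] D by simp
    finally have s: "(\<Sum>i<D. ?R (\<alpha> + 1) i * \<bar>in_w (mknet e m \<alpha> c us ws b0) i j\<bar>) = ?R (Suc \<alpha>) (e j)" .
    show ?thesis unfolding s by (rule abs_of_nonneg[OF path_row_nonneg])
  qed
  have Rj: "?R (Suc \<alpha>) (e j) \<le> 3 * ?B * (\<Sum>i<D. \<Sum>k<mw. ?U i k * ?W k j)" for j
  proof -
    have "?R (Suc \<alpha>) (e j) = 3 * (\<Sum>i<D. ?R \<alpha> i * (\<Sum>k<mw. ?U i k * ?W k j))"
      using RS[of "e j"] inv(1) elt[of j] by simp
    also have "\<dots> \<le> 3 * (\<Sum>i<D. ?B * (\<Sum>k<mw. ?U i k * ?W k j))"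
      by (intro mult_left_mono sum_mono mult_right_mono inv(2)[rule_format] sum_nonneg) auto
    finally show ?thesis by (simp add: sum_distrib_left mult.assoc)
  qed
  have colk: "(\<Sum>i<D. ?U i k) * (\<Sum>j\<in>UNIV. ?W k j)
      \<le> (if k < 2^\<alpha> * m then 2 * (\<bar>us (k div m) (k mod m)\<bar> * l1norm (ws (k div m) (k mod m)) / real m) else 0)" for k
  proof (cases "k < 2^\<alpha> * m")
    case True
    have W: "(\<Sum>j\<in>UNIV. ?W k j) = l1norm (ws (k div m) (k mod m))"
      using True elt by (simp add: mkW_def inv_e'[OF e m mw] l1norm_def)
    have "(\<Sum>i<D. ?U i k) \<le> (\<Sum>i<D. (if i = CARD('d) + k div m then \<bar>us (k div m) (k mod m) / real m\<bar> else 0)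
                 + (if i = CARD('d) + 2^\<alpha> + k div m then \<bar>us (k div m) (k mod m) / real m\<bar> else 0))"
      by (rule sum_mono) (auto simp: mkU_def)
    also have "\<dots> \<le> 2 * \<bar>us (k div m) (k mod m)\<bar> / real m"
      using m by (simp add: sum.distrib divide_right_mono)
    finally have U: "(\<Sum>i<D. ?U i k) \<le> 2 * \<bar>us (k div m) (k mod m)\<bar> / real m" .
    have l1: "0 \<le> l1norm (ws (k div m) (k mod m))" by (simp add: l1norm_def sum_nonneg)
    show ?thesis using True mult_right_mono[OF U l1] unfolding W by (simp add: algebra_simps)
  next
    case False
    have "(\<Sum>i<D. ?U i k) = 0" using False by (simp add: mkU_def)
    thus ?thesis using False by simp
  qed
  have "path_norm mw D (\<alpha> + 1) (mknet e m \<alpha> c us ws b0) = (\<Sum>j\<in>UNIV. ?R (Suc \<alpha>) (e j))"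
    unfolding path_norm_def using inner by simp
  also have "\<dots> \<le> (\<Sum>j\<in>UNIV. 3 * ?B * (\<Sum>i<D. \<Sum>k<mw. ?U i k * ?W k j))"
    by (rule sum_mono) (rule Rj)
  also have "\<dots> = 3 * ?B * (\<Sum>k<mw. (\<Sum>i<D. ?U i k) * (\<Sum>j\<in>UNIV. ?W k j))"
    by (simp add: sum_distrib_left[symmetric] triple_sum)
  also have "\<dots> \<le> 3 * ?B * (\<Sum>k<mw. if k < 2^\<alpha> * m then 2 * (\<bar>us (k div m) (k mod m)\<bar> * l1norm (ws (k div m) (k mod m)) / real m) else 0)"
    by (intro mult_left_mono sum_mono colk) (use B0 in auto)
  also have "(\<Sum>k<mw. if k < 2^\<alpha> * m then 2 * (\<bar>us (k div m) (k mod m)\<bar> * l1norm (ws (k div m) (k mod m)) / real m) else 0)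
      = (\<Sum>k<2^\<alpha> * m. 2 * (\<bar>us (k div m) (k mod m)\<bar> * l1norm (ws (k div m) (k mod m)) / real m))"
    by (rule sum_lt_restrict[OF mw])
  also have "\<dots> = (\<Sum>b<2^\<alpha>. \<Sum>k<m. 2 * (\<bar>us b k\<bar> * l1norm (ws b k) / real m))"
    by (rule group_sum)
  also have "\<dots> = 2 * (\<Sum>b<2^\<alpha>. \<Sum>k<m. \<bar>us b k\<bar> * l1norm (ws b k) / real m)"
    by (simp add: sum_distrib_left)
  finally show ?thesis by simp
qed

end

lemma integral_le_nn:
  fixes F :: "'a \<Rightarrow> real"
  assumes "\<And>x. 0 \<le> F x"
  shows "ennreal (integral\<^sup>L M F) \<le> (\<integral>\<^sup>+x. ennreal (F x) \<partial>M)"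
proof (cases "integrable M F")
  case True
  then show ?thesis using nn_integral_eq_integral[OF True] assms by simp
next
  case False
  then show ?thesis by (simp add: not_integrable_integral_eq)
qed

lemma meas_gfun: "gfun m us ws b \<in> borel_measurable (borel :: (real^'d::finite) measure)"
  unfolding gfun_def using meas_x[where 'd='d, measurable] by measurable

lemma Max_shift:
  fixes G :: "nat \<Rightarrow> real"
  assumes "0 < n"
  shows "Max ((\<lambda>a. G (a - 1) + K) ` {1..n}) = Max (G ` {0..<n}) + K"
proof -
  have e1: "{1..n} = Suc ` {0..<n}" by (simp add: image_Suc_atLeastLessThan atLeastLessThanSuc_atLeastAtMost)
  have "(\<lambda>a. G (a - 1) + K) ` {1..n} = (\<lambda>b. G b + K) ` {0..<n}" unfolding e1 image_image by simp
  also have "\<dots> = (\<lambda>v. v + K) ` (G ` {0..<n})" by (simp add: image_image)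
  finally have "(\<lambda>a. G (a - 1) + K) ` {1..n} = (\<lambda>v. v + K) ` (G ` {0..<n})" .
  moreover have "Max ((\<lambda>v. v + K) ` (G ` {0..<n})) = Max (G ` {0..<n}) + K"
    by (rule mono_Max_commute[symmetric]) (use assms in \<open>auto simp: mono_def\<close>)
  ultimately show ?thesis by simp
qed

lemma loss_bound:
  fixes S :: "(real^'d::finite) set" and e :: "'d \<Rightarrow> nat"
  assumes e: "bij_betw e UNIV {0..<CARD('d)}" and m: "0 < m" and mw: "2^\<alpha> * m \<le> mw"
    and \<gamma>: "0 \<le> \<gamma>" "\<gamma> < 1"
    and S: "S \<in> sets borel" "emeasure lborel S \<noteq> 0" "emeasure lborel S \<noteq> \<infinity>"
    and hm: "\<forall>b<2^\<alpha>. hb b \<in> borel_measurable borel" and hS: "\<forall>b<2^\<alpha>. \<forall>s\<in>S. hb b s = r s (Suc b)"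
    and err: "\<forall>b<2^\<alpha>. (\<integral>\<^sup>+x. ennreal ((gfun m us ws b x - hb b x)\<^sup>2) \<partial>uniform_measure lborel S) \<le> ennreal (ee b)"
    and ee: "\<forall>b. 0 \<le> ee b"
  shows "ennreal (bellman_loss S {1..2^\<alpha>} \<gamma> mw (CARD('d) + 2 * 2^\<alpha>) (\<alpha> + 1) r (\<lambda>a. mknet e m \<alpha> (\<gamma> / (1 - \<gamma>)) us ws (a - 1)))
     \<le> ennreal ((\<Sum>b<2^\<alpha>. ee b) / (2 * 2^\<alpha>))"
proof -
  let ?n = "(2::nat)^\<alpha>"
  let ?A = "{1..?n}"
  let ?D = "CARD('d) + 2 * 2^\<alpha>"
  let ?c = "\<gamma> / (1 - \<gamma>)"
  let ?\<Theta> = "\<lambda>a. mknet e m \<alpha> ?c us ws (a - 1)"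
  let ?\<mu> = "uniform_measure lborel S"
  define F where "F = (\<lambda>s. (1 / real (card ?A)) *
        (\<Sum>a\<in>?A. (resnet_eval mw ?D (\<alpha> + 1) (?\<Theta> a) s - r s a
                   - \<gamma> * Max ((\<lambda>a'. resnet_eval mw ?D (\<alpha> + 1) (?\<Theta> a') s) ` ?A))\<^sup>2))"
  have F0: "0 \<le> F s" for s unfolding F_def by (intro mult_nonneg_nonneg sum_nonneg) auto
  have loss: "bellman_loss S ?A \<gamma> mw ?D (\<alpha> + 1) r ?\<Theta> = 1/2 * integral\<^sup>L ?\<mu> F"
    unfolding bellman_loss_def F_def by simp
  have cardA: "card ?A = ?n" by simp
  have npos: "0 < ?n" by simp
  have Fs: "F s = (1 / real ?n) * (\<Sum>b<?n. (gfun m us ws b s - hb b s)\<^sup>2)" if s: "s \<in> S" for s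
  proof -
    let ?G = "\<lambda>b. gfun m us ws b s"
    let ?Mx = "Max (?G ` {0..<?n})"
    have ev: "resnet_eval mw ?D (\<alpha> + 1) (?\<Theta> a) s = ?G (a - 1) + ?c * ?Mx" if a: "a \<in> ?A" for a
    proof -
      have b0: "a - 1 < ?n" using a by auto
      show ?thesis by (rule eval_net[OF e m mw b0 refl])
    qed
    have mx: "Max ((\<lambda>a'. resnet_eval mw ?D (\<alpha> + 1) (?\<Theta> a') s) ` ?A) = ?Mx + ?c * ?Mx"
    proof -
      have "(\<lambda>a'. resnet_eval mw ?D (\<alpha> + 1) (?\<Theta> a') s) ` ?A = (\<lambda>a'. ?G (a' - 1) + ?c * ?Mx) ` ?A"
        by (rule image_cong[OF refl ev])
      thus ?thesis using Max_shift[OF npos, of ?G "?c * ?Mx"] by simp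
    qed
    have cid: "?c - \<gamma> * (1 + ?c) = 0" using \<gamma> by (simp add: field_simps)
    have trm: "resnet_eval mw ?D (\<alpha> + 1) (?\<Theta> a) s - r s a - \<gamma> * Max ((\<lambda>a'. resnet_eval mw ?D (\<alpha> + 1) (?\<Theta> a') s) ` ?A)
        = ?G (a - 1) - r s a" if a: "a \<in> ?A" for a
    proof -
      have "resnet_eval mw ?D (\<alpha> + 1) (?\<Theta> a) s - r s a - \<gamma> * Max ((\<lambda>a'. resnet_eval mw ?D (\<alpha> + 1) (?\<Theta> a') s) ` ?A)
          = ?G (a - 1) - r s a + (?c - \<gamma> * (1 + ?c)) * ?Mx"
        unfolding ev[OF a] mx by (simp add: algebra_simps)
      thus ?thesis using cid by simp
    qed
    have "(\<Sum>a\<in>?A. (resnet_eval mw ?D (\<alpha> + 1) (?\<Theta> a) s - r s a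
                   - \<gamma> * Max ((\<lambda>a'. resnet_eval mw ?D (\<alpha> + 1) (?\<Theta> a') s) ` ?A))\<^sup>2)
        = (\<Sum>a\<in>?A. (?G (a - 1) - r s a)\<^sup>2)"
    proof (rule sum.cong[OF refl])
      fix a assume a: "a \<in> ?A"
      show "(resnet_eval mw ?D (\<alpha> + 1) (?\<Theta> a) s - r s a - \<gamma> * Max ((\<lambda>a'. resnet_eval mw ?D (\<alpha> + 1) (?\<Theta> a') s) ` ?A))\<^sup>2
          = (?G (a - 1) - r s a)\<^sup>2" unfolding trm[OF a] ..
    qed
    also have "\<dots> = (\<Sum>b<?n. (?G b - r s (Suc b))\<^sup>2)"
      by (simp add: sum.atLeast1_atMost_eq)
    also have "\<dots> = (\<Sum>b<?n. (?G b - hb b s)\<^sup>2)"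
      by (rule sum.cong) (use hS s in auto)
    finally show ?thesis unfolding F_def cardA by simp
  qed
  have AE: "AE s in ?\<mu>. F s = (1 / real ?n) * (\<Sum>b<?n. (gfun m us ws b s - hb b s)\<^sup>2)"
    by (rule AE_uniform_measureI[OF S(1)[unfolded sets_lborel[symmetric]]]) (intro AE_I2 impI Fs)
  have meas: "(\<lambda>x. ennreal ((gfun m us ws b x - hb b x)\<^sup>2)) \<in> borel_measurable ?\<mu>" if "b \<in> {..<?n}" for b
  proof -
    have [measurable]: "hb b \<in> borel_measurable borel" using hm that by auto
    have [measurable]: "gfun m us ws b \<in> borel_measurable borel" by (rule meas_gfun)
    have "(\<lambda>x. ennreal ((gfun m us ws b x - hb b x)\<^sup>2)) \<in> borel_measurable borel" by measurable
    thus ?thesis by (subst measurable_cong_sets[OF sets_uniform_measure refl]) (simp add: sets_lborel cong: measurable_cong_sets)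
  qed
  have "ennreal (integral\<^sup>L ?\<mu> F) \<le> (\<integral>\<^sup>+s. ennreal (F s) \<partial>?\<mu>)" by (rule integral_le_nn[OF F0])
  also have "\<dots> = (\<integral>\<^sup>+s. ennreal (1 / real ?n) * (\<Sum>b<?n. ennreal ((gfun m us ws b s - hb b s)\<^sup>2)) \<partial>?\<mu>)"
    by (rule nn_integral_cong_AE) (use AE in \<open>eventually_elim, simp add: ennreal_mult[symmetric] sum_nonneg\<close>)
  also have "\<dots> = ennreal (1 / real ?n) * (\<Sum>b<?n. \<integral>\<^sup>+s. ennreal ((gfun m us ws b s - hb b s)\<^sup>2) \<partial>?\<mu>)"
  proof -
    have sm: "(\<lambda>s. \<Sum>b<?n. ennreal ((gfun m us ws b s - hb b s)\<^sup>2)) \<in> borel_measurable ?\<mu>"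
      by (rule borel_measurable_sum) (rule meas)
    have ns: "(\<integral>\<^sup>+s. (\<Sum>b<?n. ennreal ((gfun m us ws b s - hb b s)\<^sup>2)) \<partial>?\<mu>) = (\<Sum>b<?n. \<integral>\<^sup>+s. ennreal ((gfun m us ws b s - hb b s)\<^sup>2) \<partial>?\<mu>)"
      by (rule nn_integral_sum) (rule meas)
    show ?thesis unfolding ns[symmetric] by (rule nn_integral_cmult[OF sm])
  qed
  also have "\<dots> \<le> ennreal (1 / real ?n) * (\<Sum>b<?n. ennreal (ee b))"
    by (intro mult_left_mono sum_mono) (use err in auto)
  also have "\<dots> = ennreal ((\<Sum>b<?n. ee b) / real ?n)"
    using ee by (simp add: ennreal_mult[symmetric] sum_nonneg)
  finally have I: "ennreal (integral\<^sup>L ?\<mu> F) \<le> ennreal ((\<Sum>b<?n. ee b) / real ?n)" .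
  have I0: "0 \<le> integral\<^sup>L ?\<mu> F" by (rule Bochner_Integration.integral_nonneg) (simp add: F0)
  have "integral\<^sup>L ?\<mu> F \<le> (\<Sum>b<?n. ee b) / real ?n"
    using I I0 ee by (simp add: ennreal_le_iff sum_nonneg)
  hence "1/2 * integral\<^sup>L ?\<mu> F \<le> (\<Sum>b<?n. ee b) / (2 * 2^\<alpha>)" by simp
  thus ?thesis unfolding loss by (rule ennreal_leI)
qed

lemma barron_point_sq:
  fixes \<rho> :: "(real \<times> (real^'d::finite)) measure"
  assumes \<rho>: "prob_space \<rho>" "sets \<rho> = sets borel"
   and x: "\<forall>i. 0 \<le> x$i \<and> x$i \<le> 1"
   and int: "integrable \<rho> (\<lambda>(u,w). u * relu(w \<bullet> x))"
   and hx: "hx = (\<integral>(u,w). u * relu(w \<bullet> x) \<partial>\<rho>)"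
   and mom: "(\<integral>\<^sup>+(u,w). ennreal(u\<^sup>2 * (l1norm w)\<^sup>2) \<partial>\<rho>) = ennreal M" and M0: "0 \<le> M"
  shows "hx\<^sup>2 \<le> M"
proof -
  interpret P: prob_space \<rho> by fact
  define \<phi> where "\<phi> = (\<lambda>\<omega>::real \<times> (real^'d). fst \<omega> * relu (snd \<omega> \<bullet> x))"
  define q where "q = (\<lambda>\<omega>::real \<times> (real^'d). (fst \<omega>)\<^sup>2 * (l1norm (snd \<omega>))\<^sup>2)"
  have bm: "borel_measurable \<rho> = borel_measurable borel"
    by (rule measurable_cong_sets) (use \<rho> in auto)
  have e1: "(\<lambda>(u,w). u * relu(w \<bullet> x)) = \<phi>" by (rule ext) (simp add: \<phi>_def split: prod.splits)
  have e2: "(\<lambda>(u,w). u\<^sup>2 * (l1norm w)\<^sup>2) = q" by (rule ext) (simp add: q_def split: prod.splits)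
  have e3: "(\<lambda>(u,w). ennreal(u\<^sup>2 * (l1norm w)\<^sup>2)) = (\<lambda>\<omega>. ennreal (q \<omega>))" by (rule ext) (simp add: q_def split: prod.splits)
  have phi_int: "integrable \<rho> \<phi>" using int by (simp add: e1)
  have hx': "hx = integral\<^sup>L \<rho> \<phi>" using hx by (simp add: e1)
  have qm: "q \<in> borel_measurable \<rho>" using meas_mom[where 'd='d] bm by (metis e2)
  have mom': "(\<integral>\<^sup>+\<omega>. ennreal (q \<omega>) \<partial>\<rho>) = ennreal M" using mom by (simp add: e3)
  have q_int: "integrable \<rho> q"
    by (rule integrableI_nonneg) (use qm mom' in \<open>auto simp: q_def\<close>)
  have phim: "\<phi> \<in> borel_measurable \<rho>" using phi_int by auto
  have phi_le: "(\<phi> \<omega>)\<^sup>2 \<le> q \<omega>" for \<omega>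
  proof -
    have "\<bar>relu (snd \<omega> \<bullet> x)\<bar> \<le> l1norm (snd \<omega>)"
      using inner_cube_le[OF x, of "snd \<omega>"] by (auto simp: relu_def)
    hence "\<bar>\<phi> \<omega>\<bar> \<le> \<bar>fst \<omega>\<bar> * l1norm (snd \<omega>)"
      by (simp add: \<phi>_def abs_mult mult_left_mono)
    hence "\<bar>\<phi> \<omega>\<bar>\<^sup>2 \<le> (\<bar>fst \<omega>\<bar> * l1norm (snd \<omega>))\<^sup>2"
      by (rule power_mono) simp
    thus ?thesis by (simp add: q_def power_mult_distrib)
  qed
  have phi2_int: "integrable \<rho> (\<lambda>\<omega>. (\<phi> \<omega>)\<^sup>2)"
    by (rule Bochner_Integration.integrable_bound[OF q_int]) (use phim in \<open>auto intro!: AE_I2 order_trans[OF phi_le]\<close>)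
  have qM: "integral\<^sup>L \<rho> q = M"
  proof -
    have "ennreal (integral\<^sup>L \<rho> q) = ennreal M"
      using nn_integral_eq_integral[OF q_int] mom' by (auto simp: q_def)
    moreover have "integral\<^sup>L \<rho> q \<ge> 0" by (rule Bochner_Integration.integral_nonneg) (auto simp: q_def)
    ultimately show ?thesis using M0 by simp
  qed
  have "0 \<le> (\<integral>\<omega>. (\<phi> \<omega> - hx)\<^sup>2 \<partial>\<rho>)" by (rule Bochner_Integration.integral_nonneg) simp
  also have "(\<integral>\<omega>. (\<phi> \<omega> - hx)\<^sup>2 \<partial>\<rho>) = (\<integral>\<omega>. (\<phi> \<omega>)\<^sup>2 - 2 * hx * \<phi> \<omega> + hx\<^sup>2 \<partial>\<rho>)"
    by (simp add: power2_eq_square algebra_simps)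
  also have "\<dots> = (\<integral>\<omega>. (\<phi> \<omega>)\<^sup>2 \<partial>\<rho>) - 2 * hx * hx + hx\<^sup>2"
    using phi_int phi2_int by (simp add: hx' P.prob_space)
  also have "(\<integral>\<omega>. (\<phi> \<omega>)\<^sup>2 \<partial>\<rho>) \<le> M"
    using integral_mono[OF phi2_int q_int phi_le] qM by simp
  finally show ?thesis by (simp add: power2_eq_square)
qed

lemma rep_exists:
  fixes S :: "(real^'d::finite) set"
  assumes BN: "barron_norm S h = ennreal B" and B0: "0 \<le> B" and \<epsilon>: "0 < \<epsilon>"
  shows "\<exists>\<rho>\<in>barron_reps S h. \<exists>M. 0 \<le> M \<and> (\<integral>\<^sup>+(u,w). ennreal(u\<^sup>2 * (l1norm w)\<^sup>2) \<partial>\<rho>) = ennreal M \<and> M < (B + \<epsilon>)\<^sup>2"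
proof -
  have "barron_norm S h < ennreal (B + \<epsilon>)" using BN B0 \<epsilon> by (simp add: ennreal_less_iff)
  then obtain \<rho> where \<rho>: "\<rho> \<in> barron_reps S h"
    and lt: "enn_sqrt (\<integral>\<^sup>+(u,w). ennreal(u\<^sup>2 * (l1norm w)\<^sup>2) \<partial>\<rho>) < ennreal (B + \<epsilon>)"
    unfolding barron_norm_def by (auto simp: INF_less_iff)
  define mo where "mo = (\<integral>\<^sup>+(u,w). ennreal(u\<^sup>2 * (l1norm w)\<^sup>2) \<partial>\<rho>)"
  have fin: "mo \<noteq> \<infinity>" using lt by (auto simp: enn_sqrt_def mo_def)
  define M where "M = enn2real mo"
  have M0: "0 \<le> M" by (simp add: M_def)
  have moM: "mo = ennreal M" using fin by (simp add: M_def ennreal_enn2real_if)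
  have "ennreal (sqrt M) < ennreal (B + \<epsilon>)" using lt fin by (simp add: enn_sqrt_def mo_def[symmetric] M_def)
  hence s: "sqrt M < B + \<epsilon>" using B0 \<epsilon> M0 by (subst (asm) ennreal_less_iff) auto
  have "M = (sqrt M)\<^sup>2" using M0 by simp
  also have "\<dots> < (B + \<epsilon>)\<^sup>2" using s M0 by (intro power_strict_mono) auto
  finally show ?thesis using \<rho> M0 moM unfolding mo_def by blast
qed

lemma arith_loss:
  fixes \<gamma> n m X Q :: real
  assumes "0 < \<gamma>" "\<gamma> < 1" "0 < m" "1 \<le> n" "0 \<le> Q" "X \<le> 9/4 * Q"
  shows "8 * X / m / (2 * n) \<le> 32 / (1 - \<gamma>)\<^sup>2 * (n + 1) * (n ^ 4 + 1) / m * Q"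
proof -
  have g: "(1 - \<gamma>)\<^sup>2 \<le> 1" using assms by (simp add: power_le_one)
  have g0: "0 < (1 - \<gamma>)\<^sup>2" using assms by simp
  have "1 \<le> 1 / (1 - \<gamma>)\<^sup>2" using g g0 by (simp add: field_simps)
  moreover have "2 \<le> (n + 1) * (n ^ 4 + 1)"
  proof -
    have "1 \<le> n ^ 4" using assms by (simp add: one_le_power)
    hence "1 * 2 \<le> (n + 1) * (n ^ 4 + 1)" using assms by (intro mult_mono) auto
    thus ?thesis by simp
  qed
  ultimately have K: "2 \<le> 1 / (1 - \<gamma>)\<^sup>2 * ((n + 1) * (n ^ 4 + 1))"
    by (metis mult_mono mult_1 dual_order.trans zero_le_numeral order.trans[OF zero_le_one])
  have "8 * X / m / (2 * n) \<le> 8 * (9/4 * Q) / m / (2 * n)"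
    using assms by (intro divide_right_mono) auto
  also have "\<dots> \<le> 8 * (9/4 * Q) / m / 2"
    using assms by (intro divide_left_mono) (auto intro!: divide_nonneg_nonneg mult_nonneg_nonneg)
  also have "\<dots> = 9 * Q / m" by simp
  also have "\<dots> \<le> 16 * (2 * Q) / m" using assms by (intro divide_right_mono) auto
  also have "\<dots> \<le> 16 * ((1 / (1 - \<gamma>)\<^sup>2 * ((n + 1) * (n ^ 4 + 1))) * Q) / m"
    using assms K by (intro divide_right_mono mult_left_mono mult_right_mono) auto
  also have "\<dots> \<le> 32 / (1 - \<gamma>)\<^sup>2 * (n + 1) * (n ^ 4 + 1) / m * Q"
  proof -
    have "16 * ((1 / (1 - \<gamma>)\<^sup>2 * ((n + 1) * (n ^ 4 + 1))) * Q) / m \<le> 32 * ((1 / (1 - \<gamma>)\<^sup>2 * ((n + 1) * (n ^ 4 + 1))) * Q) / m"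
      using assms g0 by (intro divide_right_mono mult_right_mono) (auto intro!: mult_nonneg_nonneg)
    thus ?thesis by (simp add: field_simps)
  qed
  finally show ?thesis .
qed

lemma arith_path:
  fixes \<gamma> n SN Q :: real
  assumes "0 < \<gamma>" "\<gamma> < 1" "1 \<le> n" "0 \<le> Q" "0 \<le> SN" "SN \<le> 3/2 * sqrt n * sqrt Q"
  shows "n * (6 * ((1 + \<gamma> / (1 - \<gamma>)) * n\<^sup>2) * (8/7 * SN)) \<le> 12 / (1 - \<gamma>) * (n powr (7/2) + n powr (1/2)) * sqrt Q"
proof -
  have c: "1 + \<gamma> / (1 - \<gamma>) = 1 / (1 - \<gamma>)" using assms by (simp add: field_simps)
  have p: "n powr (7/2) = n ^ 3 * sqrt n"
  proof -
    have n0: "0 < n" using assms by simp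
    have "n powr (7/2) = n powr (3 + 1/2)" by simp
    also have "\<dots> = n powr 3 * n powr (1/2)" by (rule powr_add)
    also have "n powr 3 = n ^ 3" using powr_realpow[OF n0, of 3] by simp
    also have "n powr (1/2) = sqrt n" using n0 by (simp add: powr_half_sqrt)
    finally show ?thesis .
  qed
  have g: "0 < 1 - \<gamma>" using assms by simp
  have "n * (6 * ((1 + \<gamma> / (1 - \<gamma>)) * n\<^sup>2) * (8/7 * SN)) = 48/7 * (1 / (1 - \<gamma>)) * n ^ 3 * SN"
    unfolding c by (simp add: power2_eq_square power3_eq_cube algebra_simps)
  also have "\<dots> \<le> 48/7 * (1 / (1 - \<gamma>)) * n ^ 3 * (3/2 * sqrt n * sqrt Q)"
    using assms g by (intro mult_left_mono) auto
  also have "\<dots> = 72/7 * (1 / (1 - \<gamma>)) * (n ^ 3 * sqrt n) * sqrt Q" by (simp add: algebra_simps)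
  also have "\<dots> \<le> 12 * (1 / (1 - \<gamma>)) * (n ^ 3 * sqrt n) * sqrt Q"
    using assms g by (intro mult_right_mono) auto
  also have "\<dots> \<le> 12 * (1 / (1 - \<gamma>)) * (n powr (7/2) + n powr (1/2)) * sqrt Q"
    using assms g unfolding p by (intro mult_right_mono mult_left_mono) auto
  finally show ?thesis by simp
qed

lemma sumN_bound:
  fixes B :: "nat \<Rightarrow> real" and \<epsilon> :: real
  assumes "0 < n" "\<epsilon>\<^sup>2 = (\<Sum>b<n. (B b)\<^sup>2) / (8 * n)"
  shows "(\<Sum>b<n. (B b + \<epsilon>)\<^sup>2) \<le> 9/4 * (\<Sum>b<n. (B b)\<^sup>2)"
proof -
  have "(\<Sum>b<n. (B b + \<epsilon>)\<^sup>2) \<le> (\<Sum>b<n. 2 * (B b)\<^sup>2 + 2 * \<epsilon>\<^sup>2)"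
  proof (rule sum_mono)
    fix b
    have "0 \<le> (B b - \<epsilon>)\<^sup>2" by simp
    thus "(B b + \<epsilon>)\<^sup>2 \<le> 2 * (B b)\<^sup>2 + 2 * \<epsilon>\<^sup>2" by (simp add: power2_eq_square algebra_simps)
  qed
  also have "\<dots> = 2 * (\<Sum>b<n. (B b)\<^sup>2) + 2 * n * \<epsilon>\<^sup>2" by (simp add: sum.distrib sum_distrib_left)
  also have "2 * n * \<epsilon>\<^sup>2 = (\<Sum>b<n. (B b)\<^sup>2) / 4" using assms by (simp add: field_simps)
  finally show ?thesis by simp
qed

lemma cs_sum:
  fixes N :: "nat \<Rightarrow> real"
  assumes "\<forall>b. 0 \<le> N b" "(\<Sum>b<n. (N b)\<^sup>2) \<le> 9/4 * Q"
  shows "(\<Sum>b<n. N b) \<le> 3/2 * sqrt (real n) * sqrt Q"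
proof -
  have "(\<Sum>b<n. 1 * N b)\<^sup>2 \<le> (\<Sum>b<n. 1\<^sup>2) * (\<Sum>b<n. (N b)\<^sup>2)" by (rule Cauchy_Schwarz_ineq_sum)
  moreover have "real n * (\<Sum>b<n. (N b)\<^sup>2) \<le> real n * (9/4 * Q)"
    using assms(2) by (intro mult_left_mono) auto
  ultimately have "(\<Sum>b<n. N b)\<^sup>2 \<le> real n * (9/4 * Q)" by simp
  hence "sqrt ((\<Sum>b<n. N b)\<^sup>2) \<le> sqrt (real n * (9/4 * Q))" by (rule real_sqrt_le_mono)
  moreover have "0 \<le> (\<Sum>b<n. N b)" using assms by (simp add: sum_nonneg)
  ultimately show ?thesis by (simp add: real_sqrt_mult real_sqrt_divide)
qed

theorem proposition3p4:
  fixes S :: "(real^'d) set" and r :: "real^'d \<Rightarrow> nat \<Rightarrow> real"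
    and \<gamma> :: real and m \<alpha> :: nat
  assumes "0 < \<gamma>" and "\<gamma> < 1" and "0 < m"
    and "compact S" and "S \<subseteq> {x. \<forall>i. 0 \<le> x $ i \<and> x $ i \<le> 1}"
    and "emeasure lborel S > 0"
    and "\<forall>a\<in>{1..2^\<alpha>}. continuous_on S (\<lambda>s. r s a) \<and> in_barron S (\<lambda>s. r s a)"
    and "\<forall>s\<in>S. \<forall>a\<in>{1..2^\<alpha>}. \<bar>r s a\<bar> \<le> 1"
  shows "\<exists>D0 > 0. \<exists>\<Theta> :: nat \<Rightarrow> 'd resnet.
    ennreal (bellman_loss S {1..2^\<alpha>} \<gamma> ((6^\<alpha> + 1) * m) D0 (\<alpha> + 1) r \<Theta>)
      \<le> ennreal (32 / (1 - \<gamma>)^2 * (real (card {1..(2::nat)^\<alpha>}) + 1)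
                 * (real (card {1..(2::nat)^\<alpha>}) ^ 4 + 1) / real m)
        * (barron_norm_family S {1..2^\<alpha>} r)\<^sup>2
    \<and> ennreal (\<Sum>a\<in>{1..2^\<alpha>}. path_norm ((6^\<alpha> + 1) * m) D0 (\<alpha> + 1) (\<Theta> a))
      \<le> ennreal (12 / (1 - \<gamma>) * (real (card {1..(2::nat)^\<alpha>}) powr (7/2)
                 + real (card {1..(2::nat)^\<alpha>}) powr (1/2)))
        * barron_norm_family S {1..2^\<alpha>} r"
proof -
  have \<gamma>0: "0 < \<gamma>" and \<gamma>1: "\<gamma> < 1" and m0: "0 < m" and Scomp: "compact S"
    and Scube: "S \<subseteq> {x. \<forall>i. 0 \<le> x $ i \<and> x $ i \<le> 1}" and Spos: "emeasure lborel S > 0"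
    and rA: "\<forall>a\<in>{1..2^\<alpha>}. continuous_on S (\<lambda>s. r s a) \<and> in_barron S (\<lambda>s. r s a)"
    using assms by auto
  obtain e :: "'d \<Rightarrow> nat" where e: "bij_betw e UNIV {0..<CARD('d)}"
    using ex_bij_betw_finite_nat[of "UNIV :: 'd set"] by auto
  define mw where "mw = (6^\<alpha> + 1) * m"
  have mw: "2^\<alpha> * m \<le> mw"
  proof -
    have "(2::nat)^\<alpha> \<le> 6^\<alpha>" by (rule power_mono) auto
    hence "(2::nat)^\<alpha> \<le> 6^\<alpha> + 1" by simp
    thus ?thesis unfolding mw_def by (rule mult_right_mono) simp
  qed
  define D0 where "D0 = CARD('d) + 2 * 2^\<alpha>"
  have D0pos: "0 < D0" by (simp add: D0_def)
  define c where "c = \<gamma> / (1 - \<gamma>)"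
  have c0: "0 \<le> c" using \<gamma>0 \<gamma>1 by (simp add: c_def)
  have Sb: "S \<in> sets borel" using Scomp by (simp add: compact_imp_closed borel_closed)
  have Sbl: "S \<in> sets lborel" using Sb by simp
  have Snz: "emeasure lborel S \<noteq> 0" using Spos by simp
  have Sfin: "emeasure lborel S \<noteq> \<infinity>" using emeasure_bounded_finite[OF compact_imp_bounded[OF Scomp]] by simp
  define \<mu> where "\<mu> = uniform_measure lborel S"
  have \<mu>p: "prob_space \<mu>" unfolding \<mu>_def by (rule prob_space_uniform_measure[OF Snz Sfin])
  have \<mu>s: "sets \<mu> = sets borel" by (simp add: \<mu>_def)
  define hb where "hb = (\<lambda>b x. indicator S x *\<^sub>R r x (Suc b))"
  have hbm: "\<forall>b<2^\<alpha>. hb b \<in> borel_measurable borel"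
  proof (intro allI impI)
    fix b :: nat assume "b < 2^\<alpha>"
    hence "continuous_on S (\<lambda>s. r s (Suc b))" using rA by auto
    thus "hb b \<in> borel_measurable borel" unfolding hb_def by (rule borel_measurable_continuous_on_indicator[OF Sb])
  qed
  have hbS: "\<forall>b<2^\<alpha>. \<forall>s\<in>S. hb b s = r s (Suc b)" by (simp add: hb_def)
  define \<Theta> where "\<Theta> = (\<lambda>us ws a. mknet e m \<alpha> c us ws (a - 1))"
  have key: "ennreal (bellman_loss S {1..2^\<alpha>} \<gamma> mw D0 (\<alpha> + 1) r (\<Theta> us ws)) \<le> ennreal ((\<Sum>b<2^\<alpha>. ee b) / (2 * 2^\<alpha>))
      \<and> (\<Sum>a\<in>{1..2^\<alpha>}. path_norm mw D0 (\<alpha> + 1) (\<Theta> us ws a)) \<le> real (2^\<alpha>) * (6 * ((1 + c) * 4^\<alpha>) * (\<Sum>b<2^\<alpha>. pp b))"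
    if err: "\<forall>b<2^\<alpha>. (\<integral>\<^sup>+x. ennreal ((gfun m us ws b x - hb b x)\<^sup>2) \<partial>\<mu>) \<le> ennreal (ee b)"
      and ee: "\<forall>b. 0 \<le> ee b"
      and pp: "\<forall>b<2^\<alpha>. (\<Sum>k<m. \<bar>us b k\<bar> * l1norm (ws b k)) / real m \<le> pp b"
    for us :: "nat \<Rightarrow> nat \<Rightarrow> real" and ws :: "nat \<Rightarrow> nat \<Rightarrow> real^'d" and ee pp :: "nat \<Rightarrow> real"
  proof
    show "ennreal (bellman_loss S {1..2^\<alpha>} \<gamma> mw D0 (\<alpha> + 1) r (\<Theta> us ws)) \<le> ennreal ((\<Sum>b<2^\<alpha>. ee b) / (2 * 2^\<alpha>))"
      using loss_bound[OF e m0 mw less_imp_le[OF \<gamma>0] \<gamma>1 Sb Snz Sfin hbm hbS err[unfolded \<mu>_def] ee]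
      unfolding \<Theta>_def D0_def c_def by simp
    have each: "path_norm mw D0 (\<alpha> + 1) (\<Theta> us ws a) \<le> 6 * ((1 + c) * 4^\<alpha>) * (\<Sum>b<2^\<alpha>. pp b)"
      if a: "a \<in> {1..2^\<alpha>}" for a
    proof -
      have "path_norm mw D0 (\<alpha> + 1) (\<Theta> us ws a) \<le> 6 * ((1 + c) * 4^\<alpha>) * (\<Sum>b<2^\<alpha>. \<Sum>k<m. \<bar>us b k\<bar> * l1norm (ws b k) / real m)"
        unfolding \<Theta>_def using a by (intro pn_bound[OF e m0 mw c0]) (auto simp: D0_def)
      also have "\<dots> \<le> 6 * ((1 + c) * 4^\<alpha>) * (\<Sum>b<2^\<alpha>. pp b)"
        using c0 pp by (intro mult_left_mono sum_mono) (auto simp: sum_divide_distrib[symmetric])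
      finally show ?thesis .
    qed
    have "(\<Sum>a\<in>{1..2^\<alpha>}. path_norm mw D0 (\<alpha> + 1) (\<Theta> us ws a)) \<le> of_nat (card {1..(2::nat)^\<alpha>}) * (6 * ((1 + c) * 4^\<alpha>) * (\<Sum>b<2^\<alpha>. pp b))"
      by (rule sum_bounded_above) (rule each)
    thus "(\<Sum>a\<in>{1..2^\<alpha>}. path_norm mw D0 (\<alpha> + 1) (\<Theta> us ws a)) \<le> real (2^\<alpha>) * (6 * ((1 + c) * 4^\<alpha>) * (\<Sum>b<2^\<alpha>. pp b))"
      by simp
  qed

  let ?A = "{1..(2::nat)^\<alpha>}"
  let ?BN = "\<lambda>a. barron_norm S (\<lambda>s. r s a)"
  have cardA: "real (card ?A) = 2^\<alpha>" by simp
  have n1: "(1::real) \<le> 2^\<alpha>" by simp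
  define coef1 where "coef1 = 32 / (1 - \<gamma>)^2 * (real (card ?A) + 1) * (real (card ?A) ^ 4 + 1) / real m"
  define coef2 where "coef2 = 12 / (1 - \<gamma>) * (real (card ?A) powr (7/2) + real (card ?A) powr (1/2))"
  have coef1: "0 < coef1" unfolding coef1_def using \<gamma>1 m0 by (intro divide_pos_pos mult_pos_pos) (auto intro: add_nonneg_pos)
  have coef2: "0 < coef2" unfolding coef2_def using \<gamma>1 by (intro mult_pos_pos divide_pos_pos add_pos_pos) auto
  have fam: "barron_norm_family S ?A r = enn_sqrt (\<Sum>a\<in>?A. (?BN a)\<^sup>2)"
    by (simp add: barron_norm_family_def)
  show ?thesis
  proof (cases "\<exists>a\<in>?A. ?BN a = \<top>")
    case True
    then obtain a0 where a0: "a0 \<in> ?A" "?BN a0 = \<top>" by blast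
    have "(?BN a0)\<^sup>2 = \<top>" using a0(2) by (simp add: power2_eq_square ennreal_mult_eq_top_iff)
    hence "(\<Sum>a\<in>?A. (?BN a)\<^sup>2) = \<top>" using a0(1) by (subst ennreal_sum_eq_top) auto
    hence famT: "barron_norm_family S ?A r = \<top>" unfolding fam by (simp add: enn_sqrt_def)
    have r1: "ennreal coef1 * (barron_norm_family S ?A r)\<^sup>2 = \<top>"
      using coef1 unfolding famT by (simp add: power2_eq_square ennreal_mult_top)
    have r2: "ennreal coef2 * barron_norm_family S ?A r = \<top>"
      using coef2 unfolding famT by (simp add: ennreal_mult_top)
    show ?thesis
      apply (rule exI[of _ D0], rule conjI[OF D0pos])
      apply (rule exI[of _ "\<Theta> (\<lambda>_ _. 0) (\<lambda>_ _. 0)"])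
      using r1 r2 unfolding coef1_def coef2_def by simp
  next
    case False
    define B where "B = (\<lambda>a. enn2real (?BN a))"
    have BN: "?BN a = ennreal (B a)" if "a \<in> ?A" for a
      using False that by (simp add: B_def ennreal_enn2real_if)
    have B0: "0 \<le> B a" for a by (simp add: B_def)
    define Q where "Q = (\<Sum>b<2^\<alpha>. (B (Suc b))\<^sup>2)"
    have Q0: "0 \<le> Q" by (simp add: Q_def sum_nonneg)
    have "(\<Sum>a\<in>?A. (?BN a)\<^sup>2) = (\<Sum>a\<in>?A. ennreal ((B a)\<^sup>2))"
      by (rule sum.cong) (auto simp: BN ennreal_power B0)
    also have "\<dots> = ennreal (\<Sum>a\<in>?A. (B a)\<^sup>2)" by (simp add: sum_ennreal)
    also have "(\<Sum>a\<in>?A. (B a)\<^sup>2) = Q" by (simp add: Q_def sum.atLeast1_atMost_eq)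
    finally have famQ: "barron_norm_family S ?A r = ennreal (sqrt Q)"
      unfolding fam using Q0 by (simp add: enn_sqrt_def)
    have rhs1: "ennreal coef1 * (barron_norm_family S ?A r)\<^sup>2 = ennreal (coef1 * Q)"
    proof -
      have "(ennreal (sqrt Q))\<^sup>2 = ennreal Q" using Q0 by (simp add: ennreal_power)
      thus ?thesis unfolding famQ using Q0 coef1 by (simp add: ennreal_mult)
    qed
    have rhs2: "ennreal coef2 * barron_norm_family S ?A r = ennreal (coef2 * sqrt Q)"
      unfolding famQ using Q0 coef2 by (simp add: ennreal_mult[symmetric])
    have suff: "\<exists>D0>0. \<exists>\<Theta> :: nat \<Rightarrow> 'd resnet.
        ennreal (bellman_loss S ?A \<gamma> ((6^\<alpha> + 1) * m) D0 (\<alpha> + 1) r \<Theta>) \<le> ennreal (coef1 * Q)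
      \<and> ennreal (\<Sum>a\<in>?A. path_norm ((6^\<alpha> + 1) * m) D0 (\<alpha> + 1) (\<Theta> a)) \<le> ennreal (coef2 * sqrt Q)"
    proof (cases "Q = 0")
      case True
      have Bz: "B (Suc b) = 0" if "b < 2^\<alpha>" for b
      proof -
        have "\<forall>b\<in>{..<2^\<alpha>}. (B (Suc b))\<^sup>2 = 0"
          using True sum_nonneg_eq_0_iff[of "{..<(2::nat)^\<alpha>}" "\<lambda>b. (B (Suc b))\<^sup>2"] by (simp add: Q_def)
        thus ?thesis using that by simp
      qed
      have rz: "r s (Suc b) = 0" if b: "b < 2^\<alpha>" and s: "s \<in> S" for b s
      proof (rule ccontr)
        assume nz: "r s (Suc b) \<noteq> 0"
        have BNb: "?BN (Suc b) = ennreal 0" using BN[of "Suc b"] Bz[OF b] b by simp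
        obtain \<rho> where \<rho>: "\<rho> \<in> barron_reps S (\<lambda>s. r s (Suc b))" and
          "\<exists>M. 0 \<le> M \<and> (\<integral>\<^sup>+(u,w). ennreal(u\<^sup>2 * (l1norm w)\<^sup>2) \<partial>\<rho>) = ennreal M \<and> M < (0 + \<bar>r s (Suc b)\<bar>)\<^sup>2"
          using rep_exists[OF BNb order.refl, of "\<bar>r s (Suc b)\<bar>"] nz by auto
        then obtain M where M0: "0 \<le> M" and mom: "(\<integral>\<^sup>+(u,w). ennreal(u\<^sup>2 * (l1norm w)\<^sup>2) \<partial>\<rho>) = ennreal M"
          and MN: "M < (0 + \<bar>r s (Suc b)\<bar>)\<^sup>2" by blast
        have "(r s (Suc b))\<^sup>2 \<le> M"
          using \<rho> s Scube by (intro barron_point_sq[where x = s and \<rho> = \<rho>, OF _ _ _ _ _ mom M0]) (auto simp: barron_reps_def)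
        thus False using MN by simp
      qed
      have hz: "hb b x = 0" if "b < 2^\<alpha>" for b x
        by (cases "x \<in> S") (simp_all add: hb_def rz that)
      have K: "ennreal (bellman_loss S {1..2^\<alpha>} \<gamma> mw D0 (\<alpha> + 1) r (\<Theta> (\<lambda>_ _. 0) (\<lambda>_ _. 0))) \<le> ennreal ((\<Sum>b<(2::nat)^\<alpha>. (\<lambda>_. 0::real) b) / (2 * 2^\<alpha>))
      \<and> (\<Sum>a\<in>{1..2^\<alpha>}. path_norm mw D0 (\<alpha> + 1) (\<Theta> (\<lambda>_ _. 0) (\<lambda>_ _. 0) a)) \<le> real (2^\<alpha>) * (6 * ((1 + c) * 4^\<alpha>) * (\<Sum>b<(2::nat)^\<alpha>. (\<lambda>_. 0::real) b))"
        by (rule key) (auto simp: gfun_def hz)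
      have p0: "0 \<le> coef2 * sqrt Q" using coef2 Q0 by simp
      have q0: "0 \<le> coef1 * Q" using coef1 Q0 by simp
      show ?thesis
        apply (rule exI[of _ D0], rule conjI[OF D0pos])
        apply (rule exI[of _ "\<Theta> (\<lambda>_ _. 0) (\<lambda>_ _. 0)"])
        using K p0 q0 unfolding mw_def[symmetric]
        by (auto intro: order_trans ennreal_leI)
    next
      case False
      have Qpos: "0 < Q" using False Q0 by simp
      define \<epsilon> where "\<epsilon> = sqrt (Q / (8 * 2^\<alpha>))"
      have \<epsilon>: "0 < \<epsilon>" using Qpos by (simp add: \<epsilon>_def)
      have \<epsilon>2: "\<epsilon>\<^sup>2 = (\<Sum>b<2^\<alpha>. (B (Suc b))\<^sup>2) / real (8 * (2::nat)^\<alpha>)"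
        using Q0 by (simp add: \<epsilon>_def Q_def[symmetric])
      define N where "N = (\<lambda>b. B (Suc b) + \<epsilon>)"
      have Npos: "0 < N b" for b using B0[of "Suc b"] \<epsilon> by (simp add: N_def)
      have ex: "\<forall>b\<in>{..<2^\<alpha>}. \<exists>uw. (\<integral>\<^sup>+x. ennreal (((\<Sum>k<m. fst uw k / real m * relu (snd uw k \<bullet> x)) - hb b x)\<^sup>2) \<partial>\<mu>) \<le> ennreal (8 * (N b)\<^sup>2 / real m)
           \<and> (\<Sum>k<m. \<bar>fst uw k\<bar> * l1norm (snd uw k)) / real m \<le> 8 * N b / 7"
      proof
        fix b assume b: "b \<in> {..<(2::nat)^\<alpha>}"
        have BNb: "?BN (Suc b) = ennreal (B (Suc b))" using BN b by auto
        obtain \<rho> where \<rho>: "\<rho> \<in> barron_reps S (\<lambda>s. r s (Suc b))" and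
          "\<exists>M. 0 \<le> M \<and> (\<integral>\<^sup>+(u,w). ennreal(u\<^sup>2 * (l1norm w)\<^sup>2) \<partial>\<rho>) = ennreal M \<and> M < (B (Suc b) + \<epsilon>)\<^sup>2"
          using rep_exists[OF BNb B0 \<epsilon>] by blast
        then obtain M where M0: "0 \<le> M" and mom: "(\<integral>\<^sup>+(u,w). ennreal(u\<^sup>2 * (l1norm w)\<^sup>2) \<partial>\<rho>) = ennreal M"
          and MN: "M < (N b)\<^sup>2" by (auto simp: N_def)
        have \<rho>p: "prob_space \<rho>" "sets \<rho> = sets borel"
          and \<rho>S: "\<forall>x\<in>S. integrable \<rho> (\<lambda>(u,w). u * relu(w \<bullet> x)) \<and> r x (Suc b) = (\<integral>(u,w). u * relu(w \<bullet> x) \<partial>\<rho>)"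
          using \<rho> by (auto simp: barron_reps_def)
        have ae: "AE x in \<mu>. (\<forall>i. 0 \<le> x$i \<and> x$i \<le> 1) \<and> integrable \<rho> (\<lambda>(u,w). u * relu(w \<bullet> x))
              \<and> hb b x = (\<integral>(u,w). u * relu(w \<bullet> x) \<partial>\<rho>)"
          unfolding \<mu>_def by (rule AE_uniform_measureI[OF Sbl]) (use \<rho>S Scube in \<open>auto intro!: AE_I2 simp: hb_def\<close>)
        have hbmb: "hb b \<in> borel_measurable borel" using hbm b by auto
        obtain us ws where uw: "(\<integral>\<^sup>+x. ennreal (((\<Sum>k<m. us k / real m * relu (ws k \<bullet> x)) - hb b x)\<^sup>2) \<partial>\<mu>) \<le> ennreal (8 * (N b)\<^sup>2 / real m)"
            "(\<Sum>k<m. \<bar>us k\<bar> * l1norm (ws k)) / real m \<le> 8 * N b / 7"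
          using maurey[OF \<rho>p \<mu>p \<mu>s hbmb ae mom M0 MN Npos m0] by blast
        show "\<exists>uw. (\<integral>\<^sup>+x. ennreal (((\<Sum>k<m. fst uw k / real m * relu (snd uw k \<bullet> x)) - hb b x)\<^sup>2) \<partial>\<mu>) \<le> ennreal (8 * (N b)\<^sup>2 / real m)
           \<and> (\<Sum>k<m. \<bar>fst uw k\<bar> * l1norm (snd uw k)) / real m \<le> 8 * N b / 7"
          using uw by (intro exI[of _ "(us, ws)"]) simp
      qed
      obtain f where f: "\<forall>b\<in>{..<2^\<alpha>}. (\<integral>\<^sup>+x. ennreal (((\<Sum>k<m. fst (f b) k / real m * relu (snd (f b) k \<bullet> x)) - hb b x)\<^sup>2) \<partial>\<mu>) \<le> ennreal (8 * (N b)\<^sup>2 / real m)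
           \<and> (\<Sum>k<m. \<bar>fst (f b) k\<bar> * l1norm (snd (f b) k)) / real m \<le> 8 * N b / 7"
        using bchoice[OF ex] by blast
      define US where "US = (\<lambda>b. fst (f b))"
      define WS where "WS = (\<lambda>b. snd (f b))"
      have err: "\<forall>b<2^\<alpha>. (\<integral>\<^sup>+x. ennreal ((gfun m US WS b x - hb b x)\<^sup>2) \<partial>\<mu>) \<le> ennreal ((\<lambda>b. 8 * (N b)\<^sup>2 / real m) b)"
        using f by (auto simp: gfun_def US_def WS_def)
      have ee: "\<forall>b. 0 \<le> (\<lambda>b. 8 * (N b)\<^sup>2 / real m) b" by simp
      have pp: "\<forall>b<2^\<alpha>. (\<Sum>k<m. \<bar>US b k\<bar> * l1norm (WS b k)) / real m \<le> (\<lambda>b. 8 * N b / 7) b"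
        using f by (auto simp: US_def WS_def)
      have K1: "ennreal (bellman_loss S {1..2^\<alpha>} \<gamma> mw D0 (\<alpha> + 1) r (\<Theta> US WS)) \<le> ennreal ((\<Sum>b<2^\<alpha>. 8 * (N b)\<^sup>2 / real m) / (2 * 2^\<alpha>))"
        and K2: "(\<Sum>a\<in>{1..2^\<alpha>}. path_norm mw D0 (\<alpha> + 1) (\<Theta> US WS a)) \<le> real (2^\<alpha>) * (6 * ((1 + c) * 4^\<alpha>) * (\<Sum>b<2^\<alpha>. 8 * N b / 7))"
        using key[OF err ee pp] by auto
      define X where "X = (\<Sum>b<2^\<alpha>. (N b)\<^sup>2)"
      have X: "X \<le> 9/4 * Q"
        unfolding X_def N_def Q_def by (rule sumN_bound[OF _ \<epsilon>2]) simp
      have L: "(\<Sum>b<2^\<alpha>. 8 * (N b)\<^sup>2 / real m) / (2 * 2^\<alpha>) \<le> coef1 * Q"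
      proof -
        have "(\<Sum>b<2^\<alpha>. 8 * (N b)\<^sup>2 / real m) = 8 * X / real m"
          by (simp add: X_def sum_divide_distrib[symmetric] sum_distrib_left[symmetric])
        moreover have "8 * X / real m / (2 * 2^\<alpha>) \<le> 32 / (1 - \<gamma>)\<^sup>2 * (2^\<alpha> + 1) * ((2^\<alpha>) ^ 4 + 1) / real m * Q"
          by (rule arith_loss[OF \<gamma>0 \<gamma>1 _ n1 Q0 X]) (use m0 in simp)
        ultimately show ?thesis by (simp add: coef1_def)
      qed
      have SN: "(\<Sum>b<2^\<alpha>. N b) \<le> 3/2 * sqrt (real ((2::nat)^\<alpha>)) * sqrt Q"
        by (rule cs_sum) (use Npos X in \<open>auto simp: X_def less_imp_le\<close>)
      have P: "real (2^\<alpha>) * (6 * ((1 + c) * 4^\<alpha>) * (\<Sum>b<2^\<alpha>. 8 * N b / 7)) \<le> coef2 * sqrt Q"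
      proof -
        have f4: "(4::real)^\<alpha> = (2^\<alpha>)\<^sup>2" by (simp add: power2_eq_square power_mult_distrib[symmetric])
        have "(\<Sum>b<2^\<alpha>. 8 * N b / 7) = 8/7 * (\<Sum>b<2^\<alpha>. N b)" by (simp add: sum_divide_distrib[symmetric] sum_distrib_left[symmetric])
        hence "real (2^\<alpha>) * (6 * ((1 + c) * 4^\<alpha>) * (\<Sum>b<2^\<alpha>. 8 * N b / 7))
            = 2^\<alpha> * (6 * ((1 + \<gamma> / (1 - \<gamma>)) * (2^\<alpha>)\<^sup>2) * (8/7 * (\<Sum>b<2^\<alpha>. N b)))"
          by (simp add: c_def f4)
        also have "\<dots> \<le> 12 / (1 - \<gamma>) * ((2^\<alpha>) powr (7/2) + (2^\<alpha>) powr (1/2)) * sqrt Q"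
          by (rule arith_path[OF \<gamma>0 \<gamma>1 n1 Q0 _ ]) (use Npos SN in \<open>auto intro: sum_nonneg less_imp_le\<close>)
        finally show ?thesis by (simp add: coef2_def)
      qed
      show ?thesis
        apply (rule exI[of _ D0], rule conjI[OF D0pos])
        apply (rule exI[of _ "\<Theta> US WS"])
        using K1 K2 L P unfolding mw_def[symmetric]
        by (auto intro: order_trans ennreal_leI)
    qed
    show ?thesis using suff unfolding rhs1[unfolded coef1_def] rhs2[unfolded coef2_def] coef1_def coef2_def .
  qed
qed


end
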